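(* Let $M$ be an $A\mathcal{V}$-module that is finitely generated as an $A$-module. Then $M$ is a holonomic $A\mathcal{V}$-module.
   Context: Setup: $\Bbbk$ algebraically closed, characteristic $0$; $A=\Bbbk[x_1,\dots,x_n]$; $\mathcal{V}=\mathrm{Der}(A)$. An $A\mathcal{V}$-module is an $A$-module and $\mathcal{V}$-module $M$ with $\eta(fm)=\eta(f)m+f(\eta m)$ for $\eta\in\mathcal{V},f\in A,m\in M$, i.e. a module over the smash product $A\#U(\mathcal{V})$. $\mathrm{GKdim}_{A\mathcal{V}}$ is the Gelfand–Kirillov dimension over $A\#U(\mathcal{V})$: $\limsup_m\log_m\dim(C^mM_0)$ for a finite-dimensional generating subspace $C\ni1$ of the algebra and a finite-dimensional generating subspace $M_0$ of the module. A finitely generated $A\mathcal{V}$-module $M$ is holonomic if $M=0$ or $\mathrm{GKdim}_{A\mathcal{V}}(M)=n$. *)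

theory Defs
  imports "HOL-Library.Poly_Mapping" "HOL-Computational_Algebra.Polynomial" "HOL-Library.Extended_Real" "HOL-Library.Function_Algebras"
begin

text \<open>Polynomial ring A = k[x_i | i in 'n] over a field k, with a finite index type 'n
  of variables (so n = CARD('n)).  Monomials are finitely supported exponent vectors.\<close>
type_synonym ('n, 'k) mpoly = "('n \<Rightarrow>\<^sub>0 nat) \<Rightarrow>\<^sub>0 'k"

definition constA :: "'k::comm_ring_1 \<Rightarrow> ('n, 'k) mpoly" where
  "constA c = Poly_Mapping.single 0 c"

definition alg_closed_field :: "'k::field itself \<Rightarrow> bool" where
  "alg_closed_field _ \<longleftrightarrow> (\<forall>p :: 'k poly. degree p > 0 \<longrightarrow> (\<exists>x. poly p x = 0))"

text \<open>V = Der(A): k-linear derivations of A.\<close>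
definition Der :: "(('n, 'k::field) mpoly \<Rightarrow> ('n, 'k) mpoly) set" where
  "Der = {D. (\<forall>p q. D (p + q) = D p + D q) \<and> (\<forall>c p. D (constA c * p) = constA c * D p)
            \<and> (\<forall>p q. D (p * q) = p * D q + q * D p)}"

definition lie_bracket :: "('a \<Rightarrow> 'a::ab_group_add) \<Rightarrow> ('a \<Rightarrow> 'a) \<Rightarrow> 'a \<Rightarrow> 'a" where
  "lie_bracket D E = (\<lambda>p. D (E p) - E (D p))"

definition AV_module ::
  "('k::field \<Rightarrow> 'm::ab_group_add \<Rightarrow> 'm) \<Rightarrow> (('n, 'k) mpoly \<Rightarrow> 'm \<Rightarrow> 'm)
     \<Rightarrow> ((('n, 'k) mpoly \<Rightarrow> ('n, 'k) mpoly) \<Rightarrow> 'm \<Rightarrow> 'm) \<Rightarrow> bool" where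
  "AV_module smul actA actV \<longleftrightarrow>
     vector_space smul
     \<comment> \<open>A-module (unital, k-algebra compatible)\<close>
     \<and> (\<forall>f g m. actA (f * g) m = actA f (actA g m))
     \<and> (\<forall>f g m. actA (f + g) m = actA f m + actA g m)
     \<and> (\<forall>f m m'. actA f (m + m') = actA f m + actA f m')
     \<and> (\<forall>c m. actA (constA c) m = smul c m)
     \<comment> \<open>V-module (Lie algebra module over k)\<close>
     \<and> (\<forall>D\<in>Der. \<forall>E\<in>Der. \<forall>m. actV (\<lambda>p. D p + E p) m = actV D m + actV E m)
     \<and> (\<forall>D\<in>Der. \<forall>c m. actV (\<lambda>p. constA c * D p) m = smul c (actV D m))
     \<and> (\<forall>D\<in>Der. \<forall>m m'. actV D (m + m') = actV D m + actV D m')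
     \<and> (\<forall>D\<in>Der. \<forall>c m. actV D (smul c m) = smul c (actV D m))
     \<and> (\<forall>D\<in>Der. \<forall>E\<in>Der. \<forall>m. actV (lie_bracket D E) m = actV D (actV E m) - actV E (actV D m))
     \<comment> \<open>compatibility\<close>
     \<and> (\<forall>D\<in>Der. \<forall>f m. actV D (actA f m) = actA (D f) m + actA f (actV D m))"

definition fg_A_module :: "(('n, 'k::field) mpoly \<Rightarrow> 'm::ab_group_add \<Rightarrow> 'm) \<Rightarrow> bool" where
  "fg_A_module actA \<longleftrightarrow>
     (\<exists>G. finite G \<and> (\<forall>m. \<exists>c. m = (\<Sum>g\<in>G. actA (c g) g)))"

definition op_smul :: "('k::field \<Rightarrow> 'm \<Rightarrow> 'm) \<Rightarrow> 'k \<Rightarrow> ('m \<Rightarrow> 'm) \<Rightarrow> 'm \<Rightarrow> 'm" where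
  "op_smul smul c T = (\<lambda>x. smul c (T x))"

text \<open>The k-subalgebra of End_k(M) generated by a set X of operators: span of all words.\<close>
definition alg_gen :: "('k::field \<Rightarrow> 'm \<Rightarrow> 'm) \<Rightarrow> ('m \<Rightarrow> 'm) set \<Rightarrow> ('m \<Rightarrow> 'm::ab_group_add) set" where
  "alg_gen smul X = module.span (op_smul smul) {foldr (\<circ>) ws id | ws. set ws \<subseteq> X}"

text \<open>Image of A # U(V) in End_k(M).\<close>
definition AV_ops ::
  "('k::field \<Rightarrow> 'm::ab_group_add \<Rightarrow> 'm) \<Rightarrow> (('n, 'k) mpoly \<Rightarrow> 'm \<Rightarrow> 'm)
     \<Rightarrow> ((('n, 'k) mpoly \<Rightarrow> ('n, 'k) mpoly) \<Rightarrow> 'm \<Rightarrow> 'm) \<Rightarrow> ('m \<Rightarrow> 'm) set" where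
  "AV_ops smul actA actV = alg_gen smul (range actA \<union> actV ` Der)"

primrec pow_apply :: "('k::field \<Rightarrow> 'm \<Rightarrow> 'm::ab_group_add) \<Rightarrow> ('m \<Rightarrow> 'm) set \<Rightarrow> 'm set \<Rightarrow> nat \<Rightarrow> 'm set" where
  "pow_apply smul C M0 0 = module.span smul M0"
| "pow_apply smul C M0 (Suc m) = module.span smul (\<Union>T\<in>C. T ` pow_apply smul C M0 m)"

definition fin_dim_subspace :: "('k::field \<Rightarrow> 'b \<Rightarrow> 'b::ab_group_add) \<Rightarrow> 'b set \<Rightarrow> bool" where
  "fin_dim_subspace sc W \<longleftrightarrow> (\<exists>B. finite B \<and> W = module.span sc B)"

definition gk_growth :: "('k::field \<Rightarrow> 'm \<Rightarrow> 'm::ab_group_add) \<Rightarrow> ('m \<Rightarrow> 'm) set \<Rightarrow> 'm set \<Rightarrow> ereal" where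
  "gk_growth smul C M0 =
     limsup (\<lambda>m. ereal (log (real m) (real (vector_space.dim smul (pow_apply smul C M0 m)))))"

text \<open>Pairs (C, M_0): C a finite-dimensional generating subspace (containing 1) of the
  algebra (through its image in End_k(M)), M_0 a finite-dimensional generating subspace of M.\<close>
definition gen_pairs ::
  "('k::field \<Rightarrow> 'm::ab_group_add \<Rightarrow> 'm) \<Rightarrow> (('n, 'k) mpoly \<Rightarrow> 'm \<Rightarrow> 'm)
     \<Rightarrow> ((('n, 'k) mpoly \<Rightarrow> ('n, 'k) mpoly) \<Rightarrow> 'm \<Rightarrow> 'm) \<Rightarrow> (('m \<Rightarrow> 'm) set \<times> 'm set) set" where
  "gen_pairs smul actA actV =
     {(C, M0). fin_dim_subspace (op_smul smul) C \<and> id \<in> C \<and> C \<subseteq> AV_ops smul actA actV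
        \<and> alg_gen smul C = AV_ops smul actA actV
        \<and> fin_dim_subspace smul M0
        \<and> module.span smul (\<Union>T\<in>AV_ops smul actA actV. T ` M0) = UNIV}"

definition fg_AV_module ::
  "('k::field \<Rightarrow> 'm::ab_group_add \<Rightarrow> 'm) \<Rightarrow> (('n, 'k) mpoly \<Rightarrow> 'm \<Rightarrow> 'm)
     \<Rightarrow> ((('n, 'k) mpoly \<Rightarrow> ('n, 'k) mpoly) \<Rightarrow> 'm \<Rightarrow> 'm) \<Rightarrow> bool" where
  "fg_AV_module smul actA actV \<longleftrightarrow>
     (\<exists>F. finite F \<and> module.span smul (\<Union>T\<in>AV_ops smul actA actV. T ` F) = UNIV)"

definition GKdim_AV ::
  "('k::field \<Rightarrow> 'm::ab_group_add \<Rightarrow> 'm) \<Rightarrow> (('n, 'k) mpoly \<Rightarrow> 'm \<Rightarrow> 'm)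
     \<Rightarrow> ((('n, 'k) mpoly \<Rightarrow> ('n, 'k) mpoly) \<Rightarrow> 'm \<Rightarrow> 'm) \<Rightarrow> ereal" where
  "GKdim_AV smul actA actV =
     (SUP p \<in> gen_pairs smul actA actV. gk_growth smul (fst p) (snd p))"

definition holonomic ::
  "('k::field \<Rightarrow> 'm::ab_group_add \<Rightarrow> 'm) \<Rightarrow> (('n::finite, 'k) mpoly \<Rightarrow> 'm \<Rightarrow> 'm)
     \<Rightarrow> ((('n, 'k) mpoly \<Rightarrow> ('n, 'k) mpoly) \<Rightarrow> 'm \<Rightarrow> 'm) \<Rightarrow> bool" where
  "holonomic smul actA actV \<longleftrightarrow> fg_AV_module smul actA actV \<and>
     ((UNIV :: 'm set) = {0} \<or> GKdim_AV smul actA actV = ereal (real (card (UNIV :: 'n set))))"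

end

theory Submission
  imports Defs "HOL-Library.FuncSet"
begin

abbreviation lookup where "lookup \<equiv> Poly_Mapping.lookup"
abbreviation keys where "keys \<equiv> Poly_Mapping.keys"

definition mon :: "('n \<Rightarrow>\<^sub>0 nat) \<Rightarrow> ('n,'k::comm_ring_1) mpoly" where
  "mon a = Poly_Mapping.single a 1"

definition ev :: "'n \<Rightarrow> ('n \<Rightarrow>\<^sub>0 nat)" where "ev i = Poly_Mapping.single i 1"

definition Xv :: "'n \<Rightarrow> ('n,'k::comm_ring_1) mpoly" where "Xv i = mon (ev i)"

lemma constA_mult_lookup: "lookup (constA c * p) k = c * lookup p k"
  unfolding constA_def mult_map_scale_conv_mult[symmetric]
  by (simp add: Poly_Mapping.map.rep_eq when_def)

lemma constA_add: "constA (c + d) = constA c + constA d"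
  by (simp add: constA_def single_add)
lemma constA_mult: "constA (c * d) = (constA c * constA d :: ('n,'k::comm_ring_1) mpoly)"
  by (simp add: constA_def mult_single)
lemma constA_0[simp]: "constA 0 = 0" by (simp add: constA_def)
lemma constA_1[simp]: "constA 1 = 1" by (simp add: constA_def)
lemma constA_uminus: "constA (- c) = - constA c" by (simp add: constA_def single_uminus)
lemma constA_diff: "constA (c - d) = constA c - constA d" by (simp add: constA_def single_diff)
lemma constA_sum: "constA (\<Sum>i\<in>I. f i) = (\<Sum>i\<in>I. constA (f i))"
  by (induction I rule: infinite_finite_induct) (auto simp: constA_add)

lemma single_constA_mon: "Poly_Mapping.single a c = constA c * mon a"
  by (simp add: constA_def mon_def mult_single)

lemma mon_add: "mon (a + b) = (mon a * mon b :: ('n,'k::comm_ring_1) mpoly)"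
  by (simp add: mon_def mult_single)
lemma mon_0[simp]: "mon 0 = 1" by (simp add: mon_def)

lemma poly_expand: "p = (\<Sum>a\<in>keys p. Poly_Mapping.single a (lookup p a))"
proof (rule poly_mapping_eqI)
  fix k
  have "lookup (\<Sum>a\<in>keys p. Poly_Mapping.single a (lookup p a)) k
     = (\<Sum>a\<in>keys p. lookup (Poly_Mapping.single a (lookup p a)) k)" by (simp add: Poly_Mapping.lookup_sum)
  also have "\<dots> = (if k \<in> keys p then lookup p k else 0)"
    by (simp add: lookup_single when_def sum.delta)
  also have "\<dots> = lookup p k" by (simp add: in_keys_iff)
  finally show "lookup p k = lookup (\<Sum>a\<in>keys p. Poly_Mapping.single a (lookup p a)) k" by simp
qed

lemma poly_expand': "p = (\<Sum>a\<in>keys p. constA (lookup p a) * mon a)"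
  by (subst poly_expand) (simp add: single_constA_mon)

definition lin_ext :: "(('n \<Rightarrow>\<^sub>0 nat) \<Rightarrow> ('n,'k::comm_ring_1) mpoly) \<Rightarrow> ('n,'k) mpoly \<Rightarrow> ('n,'k) mpoly" where
  "lin_ext h p = (\<Sum>a\<in>keys p. constA (lookup p a) * h a)"

lemma lin_ext_superset:
  assumes "finite K" "keys p \<subseteq> K"
  shows "lin_ext h p = (\<Sum>a\<in>K. constA (lookup p a) * h a)"
  unfolding lin_ext_def
  by (rule sum.mono_neutral_left[OF assms]) (auto simp: in_keys_iff)

lemma lin_ext_add: "lin_ext h (p + q) = lin_ext h p + lin_ext h q"
proof -
  let ?K = "keys p \<union> keys q"
  have "keys (p+q) \<subseteq> ?K" by (simp add: keys_add)
  then show ?thesis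
    by (simp add: lin_ext_superset[of ?K] lookup_add constA_add distrib_right sum.distrib)
qed

lemma lin_ext_smul: "lin_ext h (constA c * p) = constA c * lin_ext h p"
proof -
  have "keys (constA c * p) \<subseteq> keys p" by (auto simp: in_keys_iff constA_mult_lookup)
  then show ?thesis
    by (simp add: lin_ext_superset[of "keys p"] constA_mult_lookup constA_mult sum_distrib_left mult.assoc)
qed

lemma lin_ext_0[simp]: "lin_ext h 0 = 0" by (simp add: lin_ext_def)

lemma lin_ext_single: "lin_ext h (Poly_Mapping.single a c) = constA c * h a"
  by (cases "c = 0") (simp_all add: lin_ext_def)

lemma lin_ext_mon[simp]: "lin_ext h (mon a) = h a"
  by (simp add: mon_def lin_ext_single)

lemma lin_ext_sum: "lin_ext h (\<Sum>i\<in>I. f i) = (\<Sum>i\<in>I. lin_ext h (f i))"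
  by (induction I rule: infinite_finite_induct) (auto simp: lin_ext_add)

lemma lin_ext_mult:
  assumes hL: "\<And>a b. h (a + b) = mon a * h b + mon b * h a"
  shows "lin_ext h (p * q) = p * lin_ext h q + q * lin_ext h p"
proof -
  let ?P = "keys p" and ?Q = "keys q"
  have pq: "p * q = (\<Sum>a\<in>?P. \<Sum>b\<in>?Q. constA (lookup p a * lookup q b) * mon (a + b))"
    apply (subst poly_expand'[of p], subst poly_expand'[of q])
    by (simp add: sum_product constA_mult mon_add algebra_simps)
  have "lin_ext h (p*q) = (\<Sum>a\<in>?P. \<Sum>b\<in>?Q. constA (lookup p a * lookup q b) * h (a + b))"
    by (simp add: pq lin_ext_sum lin_ext_smul)
  also have "\<dots> = (\<Sum>a\<in>?P. \<Sum>b\<in>?Q. constA (lookup p a * lookup q b) * (mon a * h b))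
     + (\<Sum>a\<in>?P. \<Sum>b\<in>?Q. constA (lookup p a * lookup q b) * (mon b * h a))"
    by (simp add: hL distrib_left sum.distrib)
  also have "(\<Sum>a\<in>?P. \<Sum>b\<in>?Q. constA (lookup p a * lookup q b) * (mon a * h b)) = p * lin_ext h q"
    apply (subst (3) poly_expand'[of p])
    by (simp add: lin_ext_def sum_product constA_mult algebra_simps)
  also have "(\<Sum>a\<in>?P. \<Sum>b\<in>?Q. constA (lookup p a * lookup q b) * (mon b * h a)) = q * lin_ext h p"
    apply (subst (3) poly_expand'[of q])
    apply (simp add: lin_ext_def sum_product constA_mult algebra_simps)
    by (rule sum.swap)
  finally show ?thesis .
qed

lemma lin_ext_Der:
  assumes hL: "\<And>a b. h (a + b) = mon a * h b + mon b * h a"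
  shows "lin_ext h \<in> Der"
  unfolding Der_def using lin_ext_add lin_ext_smul lin_ext_mult[OF hL] by blast

lemma lookup_ev: "lookup (ev i) j = (if i = j then 1 else 0)"
  by (simp add: ev_def lookup_single when_def)

definition hvf :: "('n::finite \<Rightarrow> ('n,'k::comm_ring_1) mpoly) \<Rightarrow> ('n \<Rightarrow>\<^sub>0 nat) \<Rightarrow> ('n,'k) mpoly" where
  "hvf g a = (\<Sum>i\<in>UNIV. constA (of_nat (lookup a i)) * mon (a - ev i) * g i)"

definition vf :: "('n::finite \<Rightarrow> ('n,'k::comm_ring_1) mpoly) \<Rightarrow> ('n,'k) mpoly \<Rightarrow> ('n,'k) mpoly" where
  "vf g = lin_ext (hvf g)"

lemma pm_nat_eq: "(\<And>k. lookup (a::'n \<Rightarrow>\<^sub>0 nat) k = lookup b k) \<Longrightarrow> a = b"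
  by (rule poly_mapping_eqI)

lemma add_sub_ev: "0 < lookup b i \<Longrightarrow> a + (b - ev i) = a + b - ev i"
  by (rule pm_nat_eq) (auto simp: lookup_add lookup_minus lookup_ev)

lemma sub_ev_add: "0 < lookup b i \<Longrightarrow> b - ev i + ev i = b"
  by (rule pm_nat_eq) (auto simp: lookup_add lookup_minus lookup_ev)

lemma hvf_term: "constA (of_nat (lookup b i)) * mon (a + (b - ev i)) =
   (constA (of_nat (lookup b i)) * mon (a + b - ev i) :: ('n,'k::comm_ring_1) mpoly)"
  by (cases "lookup b i = 0") (simp_all add: add_sub_ev)

lemma hvf_L: "hvf g (a + b) = mon a * hvf g b + mon b * hvf g a"
proof -
  have "hvf g (a + b) = (\<Sum>i\<in>UNIV. constA (of_nat (lookup b i)) * mon (a + b - ev i) * g i)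
      + (\<Sum>i\<in>UNIV. constA (of_nat (lookup a i)) * mon (b + a - ev i) * g i)"
    by (simp add: hvf_def lookup_add constA_add algebra_simps sum.distrib add.commute)
  also have "(\<Sum>i\<in>UNIV. constA (of_nat (lookup b i)) * mon (a + b - ev i) * g i) = mon a * hvf g b"
    unfolding hvf_def sum_distrib_left
    by (rule sum.cong[OF refl]) (metis (no_types, lifting) hvf_term mon_add mult.assoc mult.left_commute)
  also have "(\<Sum>i\<in>UNIV. constA (of_nat (lookup a i)) * mon (b + a - ev i) * g i) = mon b * hvf g a"
    unfolding hvf_def sum_distrib_left
    by (rule sum.cong[OF refl]) (metis (no_types, lifting) hvf_term mon_add mult.assoc mult.left_commute)
  finally show ?thesis .
qed

lemma vf_Der: "vf g \<in> Der"
  unfolding vf_def by (rule lin_ext_Der[OF hvf_L])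

lemma vf_mon: "vf g (mon a) = hvf g a" by (simp add: vf_def)

lemma hvf_ev: "hvf g (ev j) = g j"
proof -
  have "hvf g (ev j) = (\<Sum>i\<in>UNIV. if i = j then g j else 0)"
    unfolding hvf_def by (rule sum.cong) (auto simp: lookup_ev)
  then show ?thesis by simp
qed

lemma vf_X: "vf g (Xv j) = g j" by (simp add: Xv_def vf_mon hvf_ev)

lemma DerD:
  assumes "D \<in> Der"
  shows "D (p + q) = D p + D q" "D (constA c * p) = constA c * D p" "D (p * q) = p * D q + q * D p"
  using assms unfolding Der_def by blast+

lemma Der_1: "D \<in> Der \<Longrightarrow> D 1 = 0"
  using DerD(3)[of D 1 1] by simp

lemma Der_0: "D \<in> Der \<Longrightarrow> D 0 = 0"
  using DerD(1)[of D 0 0] by simp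

lemma Der_sum: "D \<in> Der \<Longrightarrow> D (\<Sum>i\<in>I. f i) = (\<Sum>i\<in>I. D (f i))"
  by (induction I rule: infinite_finite_induct) (auto simp: Der_0 DerD(1))

lemma Der_lin_ext: "D \<in> Der \<Longrightarrow> D p = lin_ext (\<lambda>a. D (mon a)) p"
  apply (subst poly_expand'[of p])
  by (simp add: Der_sum DerD(2) lin_ext_def)

lemma nonzero_decomp:
  assumes "(a::'n \<Rightarrow>\<^sub>0 nat) \<noteq> 0"
  obtains i where "0 < lookup a i" "a = (a - ev i) + ev i"
proof -
  from assms obtain i where "lookup a i \<noteq> 0" by (metis poly_mapping_eqI lookup_zero)
  then show ?thesis using that[of i] sub_ev_add[of a i] by simp
qed

lemma deg_sub_ev:
  assumes "0 < lookup a i"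
  shows "(\<Sum>j\<in>UNIV. lookup (a - ev i) j) < (\<Sum>j\<in>UNIV. lookup (a::'n::finite \<Rightarrow>\<^sub>0 nat) j)"
proof -
  have "(\<Sum>j\<in>UNIV. lookup a j) = (\<Sum>j\<in>UNIV. lookup (a - ev i) j + (if i = j then 1 else 0))"
    by (rule sum.cong) (use assms in \<open>auto simp: lookup_minus lookup_ev\<close>)
  also have "\<dots> = (\<Sum>j\<in>UNIV. lookup (a - ev i) j) + 1"
    by (simp add: sum.distrib)
  finally show ?thesis by simp
qed

lemma Der_mon:
  assumes "D \<in> Der"
  shows "D (mon a) = hvf (\<lambda>i. D (Xv i)) a"
proof (induction "\<Sum>j\<in>UNIV. lookup a j" arbitrary: a rule: less_induct)
  case less
  show ?case
  proof (cases "a = 0")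
    case True
    then show ?thesis by (simp add: Der_1[OF assms] hvf_def)
  next
    case False
    then obtain i where i: "0 < lookup a i" "a = (a - ev i) + ev i" by (rule nonzero_decomp)
    have IH: "D (mon (a - ev i)) = hvf (\<lambda>i. D (Xv i)) (a - ev i)"
      using less deg_sub_ev[OF i(1)] by blast
    have "D (mon a) = D (mon (a - ev i) * Xv i)" by (subst i(2)) (simp add: mon_add Xv_def)
    also have "\<dots> = mon (a - ev i) * D (Xv i) + Xv i * D (mon (a - ev i))"
      by (rule DerD(3)[OF assms])
    also have "\<dots> = hvf (\<lambda>i. D (Xv i)) ((a - ev i) + ev i)"
      by (simp add: hvf_L hvf_ev IH Xv_def)
    finally show ?thesis using i(2) by simp
  qed
qed

lemma Der_eq_vf: "D \<in> Der \<Longrightarrow> D = vf (\<lambda>i. D (Xv i))"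
  by (rule ext, subst Der_lin_ext, assumption) (simp add: Der_mon vf_def)

lemma Der_ext:
  fixes D E :: "('n::finite,'k::field) mpoly \<Rightarrow> ('n,'k) mpoly"
  assumes "D \<in> Der" "E \<in> Der" "\<And>j. D (Xv j) = E (Xv j)"
  shows "D = E"
  using Der_eq_vf[OF assms(1)] Der_eq_vf[OF assms(2)] assms(3) by simp

lemma DerI:
  assumes "\<And>p q. D (p + q) = D p + D q" "\<And>c p. D (constA c * p) = constA c * D p"
    "\<And>p q. D (p * q) = p * D q + q * D p"
  shows "D \<in> Der"
  using assms unfolding Der_def by blast

lemma Der_add: assumes "D \<in> Der" "E \<in> Der" shows "(\<lambda>p. D p + E p) \<in> Der"
proof (rule DerI)
  fix p q c
  show "D (p + q) + E (p + q) = D p + E p + (D q + E q)" using DerD(1)[OF assms(1)] DerD(1)[OF assms(2)] by simp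
  show "D (constA c * p) + E (constA c * p) = constA c * (D p + E p)"
    using DerD(2)[OF assms(1), of c p] DerD(2)[OF assms(2), of c p] by (simp add: distrib_left)
  show "D (p * q) + E (p * q) = p * (D q + E q) + q * (D p + E p)"
    using DerD(3)[OF assms(1), of p q] DerD(3)[OF assms(2), of p q] by (simp add: algebra_simps)
qed
lemma Der_smul: assumes "D \<in> Der" shows "(\<lambda>p. constA c * D p) \<in> Der"
proof (rule DerI)
  fix p q d
  show "constA c * D (p + q) = constA c * D p + constA c * D q" using DerD(1)[OF assms] by (simp add: distrib_left)
  show "constA c * D (constA d * p) = constA d * (constA c * D p)"
    using DerD(2)[OF assms, of d p] by (simp add: mult.left_commute)
  show "constA c * D (p * q) = p * (constA c * D q) + q * (constA c * D p)"
    using DerD(3)[OF assms, of p q] by (simp add: algebra_simps)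
qed
lemma Der_zero: "(\<lambda>p. 0) \<in> Der"
  by (rule DerI) simp_all
lemma Der_diff: assumes "D \<in> Der" "E \<in> Der" shows "(\<lambda>p. D p - E p) \<in> Der"
proof (rule DerI)
  fix p q c
  show "D (p + q) - E (p + q) = D p - E p + (D q - E q)" using DerD(1)[OF assms(1)] DerD(1)[OF assms(2)] by simp
  show "D (constA c * p) - E (constA c * p) = constA c * (D p - E p)"
    using DerD(2)[OF assms(1), of c p] DerD(2)[OF assms(2), of c p] by (simp add: right_diff_distrib)
  show "D (p * q) - E (p * q) = p * (D q - E q) + q * (D p - E p)"
    using DerD(3)[OF assms(1), of p q] DerD(3)[OF assms(2), of p q] by (simp add: algebra_simps)
qed
lemma Der_bracket: assumes "D \<in> Der" "E \<in> Der" shows "lie_bracket D E \<in> Der"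
  unfolding lie_bracket_def
proof (rule DerI)
  fix p q c
  show "D (E (p + q)) - E (D (p + q)) = D (E p) - E (D p) + (D (E q) - E (D q))"
    using DerD(1)[OF assms(1)] DerD(1)[OF assms(2)] by simp
  show "D (E (constA c * p)) - E (D (constA c * p)) = constA c * (D (E p) - E (D p))"
    using DerD(2)[OF assms(1)] DerD(2)[OF assms(2)] by (simp add: right_diff_distrib)
  show "D (E (p * q)) - E (D (p * q)) = p * (D (E q) - E (D q)) + q * (D (E p) - E (D p))"
    using DerD(1,3)[OF assms(1)] DerD(1,3)[OF assms(2)] by (simp add: algebra_simps)
qed
lemma Der_sum_fun: "(\<And>i. i \<in> I \<Longrightarrow> F i \<in> Der) \<Longrightarrow> (\<lambda>p. \<Sum>i\<in>I. F i p) \<in> Der"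
  by (induction I rule: infinite_finite_induct) (auto simp: Der_zero intro!: Der_add)

definition Vf :: "('n::finite \<Rightarrow>\<^sub>0 nat) \<Rightarrow> 'n \<Rightarrow> ('n,'k::comm_ring_1) mpoly \<Rightarrow> ('n,'k) mpoly" where
  "Vf a i = vf (\<lambda>j. if j = i then mon a else 0)"

lemma Vf_Der: "Vf a i \<in> Der" by (simp add: Vf_def vf_Der)

lemma Vf_0[simp]: "Vf a i 0 = 0" by (simp add: Vf_def vf_def)

lemma Vf_X: "Vf a i (Xv j) = (if j = i then mon a else 0)" by (simp add: Vf_def vf_X)

lemma Vf_mon: "Vf b l (mon a) = constA (of_nat (lookup a l)) * mon (a - ev l + b)"
proof -
  have "Vf b l (mon a) = (\<Sum>k\<in>UNIV. if k = l then constA (of_nat (lookup a l)) * mon (a - ev l) * mon b else 0)"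
    unfolding Vf_def vf_mon hvf_def by (rule sum.cong) auto
  then show ?thesis by (simp add: mon_add mult.assoc)
qed

lemma Vf_bracket:
  fixes a b :: "'n::finite \<Rightarrow>\<^sub>0 nat"
  shows "lie_bracket (Vf b l) (Vf a i :: ('n,'k::field) mpoly \<Rightarrow> _) = (\<lambda>p. constA (of_nat (lookup a l)) * Vf (a - ev l + b) i p
       - constA (of_nat (lookup b i)) * Vf (b - ev i + a) l p)"
proof (rule Der_ext)
  show "lie_bracket (Vf b l) (Vf a i) \<in> Der" by (intro Der_bracket Vf_Der)
  show "(\<lambda>p. constA (of_nat (lookup a l)) * Vf (a - ev l + b) i p
       - constA (of_nat (lookup b i)) * Vf (b - ev i + a) l p) \<in> Der"
    by (intro Der_diff Der_smul Vf_Der)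
  fix j
  show "lie_bracket (Vf b l) (Vf a i) (Xv j) = constA (of_nat (lookup a l)) * Vf (a - ev l + b) i (Xv j)
       - constA (of_nat (lookup b i)) * Vf (b - ev i + a) l (Xv j)"
    by (simp add: lie_bracket_def Vf_X Vf_mon)
qed

lemma vf_add: "vf (\<lambda>i. g i + h i) p = vf g p + vf h p"
proof -
  have "hvf (\<lambda>i. g i + h i) a = hvf g a + hvf h a" for a
    by (simp add: hvf_def algebra_simps sum.distrib)
  then show ?thesis by (simp add: vf_def lin_ext_def algebra_simps sum.distrib)
qed

lemma vf_smul: "vf (\<lambda>i. constA c * g i) p = constA c * vf g p"
proof -
  have "hvf (\<lambda>i. constA c * g i) a = constA c * hvf g a" for a
    by (simp add: hvf_def algebra_simps sum_distrib_left)
  then show ?thesis by (simp add: vf_def lin_ext_def algebra_simps sum_distrib_left)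
qed

lemma vf_zero: "vf (\<lambda>i. 0) p = 0"
  using vf_smul[of 0 "\<lambda>i. 0" p] by simp

lemma vf_sum: "vf (\<lambda>i. \<Sum>j\<in>J. G j i) p = (\<Sum>j\<in>J. vf (G j) p)"
  by (induction J rule: infinite_finite_induct) (auto simp: vf_zero vf_add)

lemma vf_decomp: "vf g p = (\<Sum>l\<in>UNIV. \<Sum>a\<in>keys (g l). constA (lookup (g l) a) * Vf a l p)"
proof -
  have g: "g = (\<lambda>i. \<Sum>l\<in>UNIV. \<Sum>a\<in>keys (g l). constA (lookup (g l) a) * (if i = l then mon a else 0))"
  proof
    fix i
    have "(\<Sum>l\<in>UNIV. \<Sum>a\<in>keys (g l). constA (lookup (g l) a) * (if i = l then mon a else 0))
       = (\<Sum>l\<in>UNIV. if i = l then (\<Sum>a\<in>keys (g l). constA (lookup (g l) a) * mon a) else 0)"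
      by (rule sum.cong) auto
    also have "\<dots> = g i" by (simp flip: poly_expand')
    finally show "g i = (\<Sum>l\<in>UNIV. \<Sum>a\<in>keys (g l). constA (lookup (g l) a) * (if i = l then mon a else 0))" by simp
  qed
  have "vf g p = vf (\<lambda>i. \<Sum>l\<in>UNIV. \<Sum>a\<in>keys (g l). constA (lookup (g l) a) * (if i = l then mon a else 0)) p"
    by (subst g) (rule refl)
  also have "\<dots> = (\<Sum>l\<in>UNIV. \<Sum>a\<in>keys (g l). constA (lookup (g l) a) * Vf a l p)"
    by (simp add: vf_sum vf_smul Vf_def)
  finally show ?thesis .
qed

locale avm =
  fixes smul :: "'k::field_char_0 \<Rightarrow> 'm::ab_group_add \<Rightarrow> 'm"
    and actA :: "('n::finite, 'k) mpoly \<Rightarrow> 'm \<Rightarrow> 'm"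
    and actV :: "(('n, 'k) mpoly \<Rightarrow> ('n, 'k) mpoly) \<Rightarrow> 'm \<Rightarrow> 'm"
  assumes AV: "AV_module smul actA actV"
begin

lemma vsp: "vector_space smul" using AV unfolding AV_module_def by auto

sublocale vs: vector_space smul by (rule vsp)

lemma A_mult: "actA (f * g) m = actA f (actA g m)" using AV unfolding AV_module_def by auto
lemma A_add: "actA (f + g) m = actA f m + actA g m" using AV unfolding AV_module_def by auto
lemma A_addm: "actA f (m + m') = actA f m + actA f m'" using AV unfolding AV_module_def by auto
lemma A_const: "actA (constA c) m = smul c m" using AV unfolding AV_module_def by auto
lemma V_add: "D \<in> Der \<Longrightarrow> E \<in> Der \<Longrightarrow> actV (\<lambda>p. D p + E p) m = actV D m + actV E m"
  using AV unfolding AV_module_def by auto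
lemma V_scal: "D \<in> Der \<Longrightarrow> actV (\<lambda>p. constA c * D p) m = smul c (actV D m)"
  using AV unfolding AV_module_def by auto
lemma V_addm: "D \<in> Der \<Longrightarrow> actV D (m + m') = actV D m + actV D m'"
  using AV unfolding AV_module_def by auto
lemma V_smul: "D \<in> Der \<Longrightarrow> actV D (smul c m) = smul c (actV D m)"
  using AV unfolding AV_module_def by auto
lemma V_br: "D \<in> Der \<Longrightarrow> E \<in> Der \<Longrightarrow> actV (lie_bracket D E) m = actV D (actV E m) - actV E (actV D m)"
  using AV unfolding AV_module_def by auto
lemma V_comp: "D \<in> Der \<Longrightarrow> actV D (actA f m) = actA (D f) m + actA f (actV D m)"
  using AV unfolding AV_module_def by auto

lemma A_one: "actA 1 m = m" using A_const[of 1 m] by simp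
lemma A_zero: "actA 0 m = 0" using A_add[of 0 0 m] by simp
lemma A_zerom: "actA f 0 = 0" using A_addm[of f 0 0] by simp
lemma A_smulm: "actA f (smul c m) = smul c (actA f m)"
  by (metis A_const A_mult mult.commute)
lemma A_smulp: "actA (constA c * f) m = smul c (actA f m)"
  by (simp add: A_mult A_const)
lemma A_sum: "actA (\<Sum>i\<in>I. f i) m = (\<Sum>i\<in>I. actA (f i) m)"
  by (induction I rule: infinite_finite_induct) (auto simp: A_zero A_add)
lemma A_summ: "actA f (\<Sum>i\<in>I. g i) = (\<Sum>i\<in>I. actA f (g i))"
  by (induction I rule: infinite_finite_induct) (auto simp: A_zerom A_addm)
lemma A_comm: "actA f (actA g m) = actA g (actA f m)"
  by (metis A_mult mult.commute)
lemma V_zerom: "D \<in> Der \<Longrightarrow> actV D 0 = 0" using V_addm[of D 0 0] by simp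
lemma V_summ: "D \<in> Der \<Longrightarrow> actV D (\<Sum>i\<in>I. g i) = (\<Sum>i\<in>I. actV D (g i))"
  by (induction I rule: infinite_finite_induct) (auto simp: V_zerom V_addm)
lemma V_zero: "actV (\<lambda>p. 0) m = 0"
  using V_add[OF Der_zero Der_zero, of m] by simp
lemma V_sum: "(\<And>j. j \<in> J \<Longrightarrow> F j \<in> Der) \<Longrightarrow> actV (\<lambda>p. \<Sum>j\<in>J. F j p) m = (\<Sum>j\<in>J. actV (F j) m)"
proof (induction J rule: infinite_finite_induct)
  case (insert x F')
  have "actV (\<lambda>p. \<Sum>j\<in>insert x F'. F j p) m = actV (\<lambda>p. F x p + (\<Sum>j\<in>F'. F j p)) m"
    using insert by simp
  also have "\<dots> = actV (F x) m + actV (\<lambda>p. \<Sum>j\<in>F'. F j p) m"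
    using insert by (intro V_add Der_sum_fun) auto
  finally show ?case using insert by simp
qed (auto simp: V_zero)

lemma opm: "vector_space (op_smul smul)"
  unfolding vector_space_def op_smul_def
  by (auto simp: fun_eq_iff vs.scale_right_distrib vs.scale_left_distrib)

sublocale om: vector_space "op_smul smul" by (rule opm)

lemma op_smul_apply[simp]: "op_smul smul c T x = smul c (T x)" by (simp add: op_smul_def)

definition lin :: "('m \<Rightarrow> 'm) \<Rightarrow> bool" where
  "lin T \<longleftrightarrow> (\<forall>x y. T (x + y) = T x + T y) \<and> (\<forall>c x. T (smul c x) = smul c (T x))"

lemma lin_zero: "lin T \<Longrightarrow> T 0 = 0"
  unfolding lin_def by (metis add_cancel_right_right)

lemma lin_comp: "lin S \<Longrightarrow> lin T \<Longrightarrow> lin (S \<circ> T)" by (simp add: lin_def)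
lemma lin_id: "lin id" by (simp add: lin_def)
lemma lin_foldr: "(\<And>x. x \<in> set ws \<Longrightarrow> lin x) \<Longrightarrow> lin (foldr (\<circ>) ws id)"
  by (induction ws) (auto intro: lin_comp lin_id)

lemma subspace_lin: "om.subspace {T. lin T}"
  unfolding om.subspace_def lin_def
  by (auto simp: vs.scale_right_distrib vs.scale_scale mult.commute)

lemma lin_span: "(\<And>x. x \<in> X \<Longrightarrow> lin x) \<Longrightarrow> T \<in> om.span X \<Longrightarrow> lin T"
  using om.span_minimal[of X "{T. lin T}"] subspace_lin by auto

definition words :: "('m \<Rightarrow> 'm) set \<Rightarrow> ('m \<Rightarrow> 'm) set" where
  "words X = {foldr (\<circ>) ws id | ws. set ws \<subseteq> X}"

lemma alg_gen_words: "alg_gen smul X = om.span (words X)"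
  by (simp add: alg_gen_def words_def)

lemma lin_alg_gen: "(\<And>x. x \<in> X \<Longrightarrow> lin x) \<Longrightarrow> T \<in> alg_gen smul X \<Longrightarrow> lin T"
  unfolding alg_gen_words words_def
  by (erule lin_span[rotated]) (auto intro!: lin_foldr)

lemma gen_in_alg_gen: "x \<in> X \<Longrightarrow> x \<in> alg_gen smul X"
  unfolding alg_gen_words words_def
  by (rule om.span_base) (rule CollectI, rule exI[of _ "[x]"], simp)

lemma id_in_alg_gen: "id \<in> alg_gen smul X"
  unfolding alg_gen_words words_def
  by (rule om.span_base) (rule CollectI, rule exI[of _ "[]"], simp)

lemma subspace_alg_gen: "om.subspace (alg_gen smul X)"
  unfolding alg_gen_words by simp

lemma alg_gen_add: "S \<in> alg_gen smul X \<Longrightarrow> T \<in> alg_gen smul X \<Longrightarrow> S + T \<in> alg_gen smul X"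
  unfolding alg_gen_words by (rule om.span_add)
lemma alg_gen_diff: "S \<in> alg_gen smul X \<Longrightarrow> T \<in> alg_gen smul X \<Longrightarrow> S - T \<in> alg_gen smul X"
  unfolding alg_gen_words by (rule om.span_diff)
lemma alg_gen_scale: "S \<in> alg_gen smul X \<Longrightarrow> op_smul smul c S \<in> alg_gen smul X"
  unfolding alg_gen_words by (rule om.span_scale)
lemma alg_gen_sum: "(\<And>i. i \<in> I \<Longrightarrow> S i \<in> alg_gen smul X) \<Longrightarrow> (\<Sum>i\<in>I. S i) \<in> alg_gen smul X"
  unfolding alg_gen_words by (rule om.span_sum)

lemma words_comp: "S \<in> words X \<Longrightarrow> T \<in> words X \<Longrightarrow> S \<circ> T \<in> words X"
proof -
  assume "S \<in> words X" "T \<in> words X"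
  then obtain ws vs where "S = foldr (\<circ>) ws id" "set ws \<subseteq> X" "T = foldr (\<circ>) vs id" "set vs \<subseteq> X"
    by (auto simp: words_def)
  moreover have "foldr (\<circ>) ws id \<circ> foldr (\<circ>) vs id = foldr (\<circ>) (ws @ vs) id"
    by (induction ws) (auto simp: fun_eq_iff)
  ultimately show ?thesis unfolding words_def by (auto intro!: exI[of _ "ws @ vs"])
qed

lemma alg_gen_comp:
  assumes linX: "\<And>x. x \<in> X \<Longrightarrow> lin x"
    and S: "S \<in> alg_gen smul X" and T: "T \<in> alg_gen smul X"
  shows "S \<circ> T \<in> alg_gen smul X"
proof -
  have wT: "W \<circ> T \<in> alg_gen smul X" if W: "W \<in> words X" for W
  proof -
    have lW: "lin W" using W linX by (auto simp: words_def intro!: lin_foldr)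
    have "T \<in> {T. W \<circ> T \<in> alg_gen smul X}"
      using T unfolding alg_gen_words
    proof (rule om.span_subspace_induct)
      show "om.subspace {T. W \<circ> T \<in> om.span (words X)}"
        unfolding om.subspace_def
      proof (intro conjI allI ballI impI)
        have "W \<circ> (0::'m\<Rightarrow>'m) = 0" using lin_zero[OF lW] by (simp add: fun_eq_iff)
        then show "0 \<in> {T. W \<circ> T \<in> om.span (words X)}" using om.span_zero[of "words X"] by auto
        fix x y c assume "x \<in> {T. W \<circ> T \<in> om.span (words X)}" "y \<in> {T. W \<circ> T \<in> om.span (words X)}"
        moreover have "W \<circ> (x + y) = (W \<circ> x) + (W \<circ> y)" using lW by (simp add: lin_def fun_eq_iff)
        ultimately show "x + y \<in> {T. W \<circ> T \<in> om.span (words X)}" by (simp add: om.span_add)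
      next
        fix x c assume "x \<in> {T. W \<circ> T \<in> om.span (words X)}"
        moreover have "W \<circ> op_smul smul c x = op_smul smul c (W \<circ> x)" using lW by (simp add: lin_def fun_eq_iff)
        ultimately show "op_smul smul c x \<in> {T. W \<circ> T \<in> om.span (words X)}" by (simp add: om.span_scale)
      qed
      fix x assume "x \<in> words X"
      then show "x \<in> {T. W \<circ> T \<in> om.span (words X)}"
        using words_comp[OF W] by (simp add: om.span_base)
    qed
    then show ?thesis by simp
  qed
  have "S \<in> {S. S \<circ> T \<in> alg_gen smul X}"
    using S unfolding alg_gen_words
  proof (rule om.span_subspace_induct)
    show "om.subspace {S. S \<circ> T \<in> om.span (words X)}"
      unfolding om.subspace_def
    proof (intro conjI allI ballI impI)
      have "(0::'m\<Rightarrow>'m) \<circ> T = 0" by (simp add: fun_eq_iff)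
      then show "0 \<in> {S. S \<circ> T \<in> om.span (words X)}" using om.span_zero[of "words X"] by auto
      fix x y assume "x \<in> {S. S \<circ> T \<in> om.span (words X)}" "y \<in> {S. S \<circ> T \<in> om.span (words X)}"
      moreover have "(x + y) \<circ> T = (x \<circ> T) + (y \<circ> T)" by (simp add: fun_eq_iff)
      ultimately show "x + y \<in> {S. S \<circ> T \<in> om.span (words X)}" by (simp add: om.span_add)
    next
      fix x c assume "x \<in> {S. S \<circ> T \<in> om.span (words X)}"
      moreover have "op_smul smul c x \<circ> T = op_smul smul c (x \<circ> T)" by (simp add: fun_eq_iff)
      ultimately show "op_smul smul c x \<in> {S. S \<circ> T \<in> om.span (words X)}" by (simp add: om.span_scale)
    qed
    fix x assume "x \<in> words X"
    then show "x \<in> {S. S \<circ> T \<in> om.span (words X)}" using wT by (simp add: alg_gen_words)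
  qed
  then show ?thesis by simp
qed

lemma alg_gen_sub:
  assumes linX: "\<And>x. x \<in> X \<Longrightarrow> lin x" and Y: "Y \<subseteq> alg_gen smul X"
  shows "alg_gen smul Y \<subseteq> alg_gen smul X"
proof -
  have "W \<in> alg_gen smul X" if "W \<in> words Y" for W
  proof -
    from that obtain ws where W: "W = foldr (\<circ>) ws id" "set ws \<subseteq> Y" by (auto simp: words_def)
    have "foldr (\<circ>) ws id \<in> alg_gen smul X" using W(2)
      by (induction ws) (auto simp: id_in_alg_gen intro!: alg_gen_comp[OF linX] dest: subsetD[OF Y])
    then show ?thesis using W by simp
  qed
  then show ?thesis unfolding alg_gen_words[of Y]
    by (intro om.span_minimal) (auto simp: alg_gen_words)
qed

end

definition tdeg :: "('n::finite \<Rightarrow>\<^sub>0 nat) \<Rightarrow> nat" where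
  "tdeg a = (\<Sum>i\<in>UNIV. lookup a i)"

definition Box :: "nat \<Rightarrow> ('n::finite \<Rightarrow>\<^sub>0 nat) set" where
  "Box k = {a. \<forall>i. lookup a i \<le> k}"

lemma sum_fun_app: "(\<Sum>i\<in>I. f i) x = (\<Sum>i\<in>I. f i x)"
  by (induction I rule: infinite_finite_induct) auto

lemma lookup_Box_eq: "lookup ` Box k = (\<Pi>\<^sub>E i\<in>(UNIV::'n::finite set). {..k})"
proof
  show "lookup ` Box k \<subseteq> (\<Pi>\<^sub>E i\<in>(UNIV::'n set). {..k})" by (auto simp: Box_def)
  show "(\<Pi>\<^sub>E i\<in>(UNIV::'n set). {..k}) \<subseteq> lookup ` Box k"
  proof
    fix f :: "'n \<Rightarrow> nat" assume f: "f \<in> (\<Pi>\<^sub>E i\<in>(UNIV::'n set). {..k})"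
    have "lookup (Abs_poly_mapping f) = f" by (simp add: Abs_poly_mapping_inverse)
    moreover have "Abs_poly_mapping f \<in> Box k" using f \<open>lookup (Abs_poly_mapping f) = f\<close>
      by (auto simp: Box_def)
    ultimately show "f \<in> lookup ` Box k" by (metis image_eqI)
  qed
qed

lemma inj_lookup: "inj lookup" by (simp add: inj_def poly_mapping_eqI)

lemma finite_Box: "finite (Box k :: ('n::finite \<Rightarrow>\<^sub>0 nat) set)"
proof -
  have "finite (lookup ` (Box k :: ('n \<Rightarrow>\<^sub>0 nat) set))" unfolding lookup_Box_eq
    by (rule finite_PiE) auto
  then show ?thesis using finite_imageD inj_lookup by (metis inj_on_subset subset_UNIV)
qed

lemma card_Box: "card (Box k :: ('n::finite \<Rightarrow>\<^sub>0 nat) set) = (k + 1) ^ card (UNIV :: 'n set)"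
proof -
  have "card (Box k :: ('n \<Rightarrow>\<^sub>0 nat) set) = card (lookup ` (Box k :: ('n \<Rightarrow>\<^sub>0 nat) set))"
    by (metis card_image inj_lookup inj_on_subset subset_UNIV)
  also have "\<dots> = (k+1) ^ card (UNIV :: 'n set)" unfolding lookup_Box_eq by (simp add: card_PiE)
  finally show ?thesis .
qed

lemma tdeg_le_Box: "tdeg a \<le> k \<Longrightarrow> a \<in> Box k"
  unfolding tdeg_def Box_def
  by (auto intro: order.trans[OF member_le_sum[of _ UNIV "lookup a"]])

lemma ev_Box1: "ev i \<in> Box 1" by (simp add: Box_def lookup_ev)
lemma zero_Box[simp]: "0 \<in> Box k" by (simp add: Box_def)

lemma tdeg_sub_ev: "0 < lookup a i \<Longrightarrow> tdeg (a - ev i) < tdeg a"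
  unfolding tdeg_def by (rule deg_sub_ev)

lemma tdeg_ev2: "tdeg (ev k + ev l :: 'n::finite \<Rightarrow>\<^sub>0 nat) = 2"
proof -
  have "tdeg (ev k + ev l :: 'n \<Rightarrow>\<^sub>0 nat) = (\<Sum>j\<in>UNIV. (if k = j then 1 else 0) + (if l = j then 1 else 0))"
    unfolding tdeg_def by (simp add: lookup_add lookup_ev)
  also have "\<dots> = 2" by (simp add: sum.distrib)
  finally show ?thesis .
qed

lemma tdeg_single_support:
  assumes "\<And>j. j \<noteq> i \<Longrightarrow> lookup c j = 0"
  shows "tdeg c = lookup c i"
proof -
  have "tdeg c = (\<Sum>j\<in>{i}. lookup c j)" unfolding tdeg_def
    by (rule sum.mono_neutral_right) (auto simp: assms)
  then show ?thesis by simp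
qed

lemma tdeg_two_support:
  assumes "\<And>j. j \<noteq> i \<Longrightarrow> j \<noteq> k \<Longrightarrow> lookup c j = 0" "k \<noteq> i"
  shows "tdeg c = lookup c i + lookup c k"
proof -
  have "tdeg c = (\<Sum>j\<in>{i,k}. lookup c j)" unfolding tdeg_def
    by (rule sum.mono_neutral_right) (auto simp: assms)
  then show ?thesis using assms(2) by simp
qed

context avm begin

definition Gen where "Gen = range actA \<union> actV ` Der"

lemma AV_ops_Gen: "AV_ops smul actA actV = alg_gen smul Gen"
  by (simp add: AV_ops_def Gen_def)

lemma lin_actA: "lin (actA f)" by (simp add: lin_def A_addm A_smulm)
lemma lin_actV: "D \<in> Der \<Longrightarrow> lin (actV D)" by (simp add: lin_def V_addm V_smul)
lemma lin_Gen: "x \<in> Gen \<Longrightarrow> lin x" by (auto simp: Gen_def lin_actA lin_actV)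

definition S0 where "S0 = actA ` mon ` Box 1 \<union> (\<lambda>(a,i). actV (Vf a i)) ` ({a. tdeg a \<le> 3} \<times> UNIV)"
definition C0 where "C0 = om.span S0"

lemma finite_S0: "finite S0"
proof -
  have "{a::'n \<Rightarrow>\<^sub>0 nat. tdeg a \<le> 3} \<subseteq> Box 3" using tdeg_le_Box by blast
  then have "finite {a::'n \<Rightarrow>\<^sub>0 nat. tdeg a \<le> 3}" using finite_Box finite_subset by blast
  then show ?thesis unfolding S0_def using finite_Box by auto
qed

lemma S0_Gen: "S0 \<subseteq> Gen" unfolding S0_def Gen_def using Vf_Der by auto

lemma lin_S0: "x \<in> S0 \<Longrightarrow> lin x" using S0_Gen lin_Gen by blast
lemma lin_C0: "x \<in> C0 \<Longrightarrow> lin x" unfolding C0_def by (rule lin_span[OF lin_S0])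

lemma C0_sub: "C0 \<subseteq> alg_gen smul Gen"
  unfolding C0_def
  by (rule om.span_minimal) (use S0_Gen gen_in_alg_gen subspace_alg_gen in auto)

lemma S0_in: "x \<in> S0 \<Longrightarrow> x \<in> alg_gen smul C0"
  by (rule gen_in_alg_gen) (simp add: C0_def om.span_base)

lemma actA_mon_in: "actA (mon a) \<in> alg_gen smul C0"
proof (induction "tdeg a" arbitrary: a rule: less_induct)
  case less
  show ?case
  proof (cases "a = 0")
    case True
    have "actA (mon 0) \<in> S0" unfolding S0_def using zero_Box[of 1] by blast
    then show ?thesis using S0_in True by simp
  next
    case False
    then obtain i where i: "0 < lookup a i" "a = (a - ev i) + ev i" by (rule nonzero_decomp)
    have "actA (mon a) = actA (mon (a - ev i)) \<circ> actA (mon (ev i))"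
      by (subst i(2)) (simp add: mon_add A_mult fun_eq_iff)
    moreover have "actA (mon (a - ev i)) \<in> alg_gen smul C0" using less tdeg_sub_ev[OF i(1)] by blast
    moreover have "actA (mon (ev i)) \<in> alg_gen smul C0" by (rule S0_in) (use ev_Box1[of i] in \<open>unfold S0_def, blast\<close>)
    ultimately show ?thesis using alg_gen_comp[OF lin_C0] by simp
  qed
qed

lemma actA_in: "actA f \<in> alg_gen smul C0"
proof -
  have "actA f = (\<Sum>a\<in>keys f. op_smul smul (lookup f a) (actA (mon a)))"
    apply (rule ext)
    apply (subst poly_expand'[of f])
    by (simp add: A_sum A_smulp sum_fun_app)
  then show ?thesis by (auto intro!: alg_gen_sum alg_gen_scale actA_mon_in)
qed

lemma br_step:
  assumes D: "D \<in> Der" and E: "E \<in> Der" and F: "F \<in> Der"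
    and br: "lie_bracket D E = (\<lambda>p. constA \<gamma> * F p)" and g: "\<gamma> \<noteq> 0"
    and aD: "actV D \<in> alg_gen smul C0" and aE: "actV E \<in> alg_gen smul C0"
  shows "actV F \<in> alg_gen smul C0"
proof -
  have "actV (lie_bracket D E) = (actV D \<circ> actV E) - (actV E \<circ> actV D)"
    by (simp add: fun_eq_iff V_br[OF D E])
  also have "\<dots> \<in> alg_gen smul C0"
    by (intro alg_gen_diff alg_gen_comp[OF lin_C0] aD aE)
  finally have "actV (\<lambda>p. constA \<gamma> * F p) \<in> alg_gen smul C0" using br by simp
  moreover have "actV (\<lambda>p. constA \<gamma> * F p) = op_smul smul \<gamma> (actV F)"
    by (simp add: fun_eq_iff V_scal[OF F])
  ultimately have "op_smul smul (inverse \<gamma>) (op_smul smul \<gamma> (actV F)) \<in> alg_gen smul C0"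
    by (metis alg_gen_scale)
  moreover have "op_smul smul (inverse \<gamma>) (op_smul smul \<gamma> (actV F)) = actV F"
    using g by (simp add: fun_eq_iff)
  ultimately show ?thesis by simp
qed

end

lemma lam_diff_constA: "(\<lambda>p. constA x * V p - constA y * V p) = (\<lambda>p. constA (x - y) * V p)"
  by (simp add: fun_eq_iff constA_diff algebra_simps)

context avm begin

lemma Vf_in: "actV (Vf c i) \<in> alg_gen smul C0"
proof (induction "tdeg c" arbitrary: c rule: less_induct)
  case less
  have base: "actV (Vf a j) \<in> alg_gen smul C0" if "tdeg a \<le> 3" for a j
    by (rule S0_in) (use that in \<open>unfold S0_def, force\<close>)
  show ?case
  proof (cases "tdeg c \<le> 3")
    case True then show ?thesis by (rule base)
  next
    case False
    note IH = less
    show ?thesis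
    proof (cases "\<exists>k l. k \<noteq> i \<and> l \<noteq> i \<and> 0 < lookup c k \<and> 0 < lookup (c - ev k) l")
      case True
      then obtain k l where kl: "k \<noteq> i" "l \<noteq> i" "0 < lookup c k" "0 < lookup (c - ev k) l" by blast
      have e1: "c - ev k - ev l + (ev k + ev l) = c"
        using kl by (intro pm_nat_eq) (auto simp: lookup_add lookup_minus lookup_ev)
      have e2: "lookup (ev k + ev l) i = 0" using kl by (simp add: lookup_add lookup_ev)
      have br: "lie_bracket (Vf (ev k + ev l) l) (Vf (c - ev k) i :: ('n,'k) mpoly \<Rightarrow> _)
          = (\<lambda>p. constA (of_nat (lookup (c - ev k) l)) * Vf c i p)"
        unfolding Vf_bracket e1 e2 by simp
      show ?thesis
        by (rule br_step[OF Vf_Der Vf_Der Vf_Der br])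
          (use kl IH[of "c - ev k"] tdeg_sub_ev[OF kl(3)] tdeg_ev2[of k l] base[of "ev k + ev l" l] in auto)
    next
      case nc1: False
      show ?thesis
      proof (cases "\<exists>k. k \<noteq> i \<and> 0 < lookup c k")
        case True
        then obtain k where k: "k \<noteq> i" "0 < lookup c k" by blast
        have ck: "lookup c k = 1"
        proof (rule ccontr)
          assume "lookup c k \<noteq> 1"
          then have "0 < lookup (c - ev k) k" using k by (simp add: lookup_minus lookup_ev)
          then show False using nc1 k by blast
        qed
        have cj: "lookup c j = 0" if "j \<noteq> i" "j \<noteq> k" for j
        proof (rule ccontr)
          assume "lookup c j \<noteq> 0"
          then have "0 < lookup (c - ev k) j" using that by (simp add: lookup_minus lookup_ev)
          then show False using nc1 k that by blast
        qed
        have "tdeg c = lookup c i + 1" using tdeg_two_support[OF cj k(1)] ck by simp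
        then have ci: "3 \<le> lookup c i" using False by simp
        have e1: "c - ev k - ev i + (ev i + ev k) = c"
          using k ci by (intro pm_nat_eq) (auto simp: lookup_add lookup_minus lookup_ev)
        have e2: "ev i + ev k - ev i + (c - ev k) = c"
          using k ci by (intro pm_nat_eq) (auto simp: lookup_add lookup_minus lookup_ev)
        have e3: "lookup (ev i + ev k) i = 1" using k by (simp add: lookup_add lookup_ev)
        have e4: "lookup (c - ev k) i = lookup c i" using k by (simp add: lookup_minus lookup_ev)
        have br: "lie_bracket (Vf (ev i + ev k) i) (Vf (c - ev k) i :: ('n,'k) mpoly \<Rightarrow> _)
          = (\<lambda>p. constA (of_nat (lookup c i) - 1) * Vf c i p)"
          unfolding Vf_bracket e1 e2 e3 e4 by (simp add: fun_eq_iff constA_diff algebra_simps)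
        have g: "(of_nat (lookup c i) - 1 :: 'k) \<noteq> 0" using ci by simp
        show ?thesis
          by (rule br_step[OF Vf_Der Vf_Der Vf_Der br g])
            (use k IH[of "c - ev k"] tdeg_sub_ev[OF k(2)] tdeg_ev2[of i k] base[of "ev i + ev k" i] in auto)
      next
        case False
        then have cj: "lookup c j = 0" if "j \<noteq> i" for j using that by auto
        have "tdeg c = lookup c i" using tdeg_single_support[OF cj] .
        then have ci: "4 \<le> lookup c i" using \<open>\<not> tdeg c \<le> 3\<close> by simp
        have e1: "c - ev i - ev i + (ev i + ev i) = c"
          using ci by (intro pm_nat_eq) (auto simp: lookup_add lookup_minus lookup_ev)
        have e2: "ev i + ev i - ev i + (c - ev i) = c"
          using ci by (intro pm_nat_eq) (auto simp: lookup_add lookup_minus lookup_ev)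
        have e3: "lookup (ev i + ev i) i = 2" by (simp add: lookup_add lookup_ev)
        have br: "lie_bracket (Vf (ev i + ev i) i) (Vf (c - ev i) i :: ('n,'k) mpoly \<Rightarrow> _)
          = (\<lambda>p. constA (of_nat (lookup (c - ev i) i) - 2) * Vf c i p)"
          unfolding Vf_bracket e1 e2 e3 by (simp add: fun_eq_iff constA_diff algebra_simps)
        have "lookup (c - ev i) i = lookup c i - 1" by (simp add: lookup_minus lookup_ev)
        then have "(of_nat (lookup (c - ev i) i) :: 'k) \<noteq> of_nat 2" using ci
          by (simp only: of_nat_eq_iff)
        then have g: "(of_nat (lookup (c - ev i) i) - 2 :: 'k) \<noteq> 0" by simp
        have pos: "0 < lookup c i" using ci by simp
        show ?thesis
          by (rule br_step[OF Vf_Der Vf_Der Vf_Der br g])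
            (use IH[of "c - ev i"] tdeg_sub_ev[OF pos] tdeg_ev2[of i i] base[of "ev i + ev i" i] in auto)
      qed
    qed
  qed
qed

lemma actV_in:
  assumes D: "D \<in> Der"
  shows "actV D \<in> alg_gen smul C0"
proof -
  let ?g = "\<lambda>i. D (Xv i)"
  have Deq: "D = (\<lambda>p. \<Sum>l\<in>UNIV. \<Sum>a\<in>keys (?g l). constA (lookup (?g l) a) * Vf a l p)"
    by (subst Der_eq_vf[OF D]) (rule ext, rule vf_decomp)
  have inner: "(\<lambda>p. \<Sum>a\<in>keys (?g l). constA (lookup (?g l) a) * Vf a l p) \<in> Der" for l
    by (intro Der_sum_fun Der_smul Vf_Der)
  have "actV D = (\<Sum>l\<in>UNIV. \<Sum>a\<in>keys (?g l). op_smul smul (lookup (?g l) a) (actV (Vf a l)))"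
  proof
    fix m
    have "actV D m = (\<Sum>l\<in>UNIV. actV (\<lambda>p. \<Sum>a\<in>keys (?g l). constA (lookup (?g l) a) * Vf a l p) m)"
      by (subst Deq) (rule V_sum[OF inner])
    also have "\<dots> = (\<Sum>l\<in>UNIV. \<Sum>a\<in>keys (?g l). actV (\<lambda>p. constA (lookup (?g l) a) * Vf a l p) m)"
      by (rule sum.cong[OF refl], rule V_sum) (intro Der_smul Vf_Der)
    also have "\<dots> = (\<Sum>l\<in>UNIV. \<Sum>a\<in>keys (?g l). smul (lookup (?g l) a) (actV (Vf a l) m))"
      by (simp add: V_scal[OF Vf_Der])
    finally show "actV D m = (\<Sum>l\<in>UNIV. \<Sum>a\<in>keys (?g l). op_smul smul (lookup (?g l) a) (actV (Vf a l))) m"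
      by (simp add: sum_fun_app)
  qed
  then show ?thesis by (auto intro!: alg_gen_sum alg_gen_scale Vf_in)
qed

lemma Gen_C0: "Gen \<subseteq> alg_gen smul C0"
  unfolding Gen_def using actA_in actV_in by auto

lemma AV_ops_C0: "alg_gen smul C0 = AV_ops smul actA actV"
proof
  show "alg_gen smul C0 \<subseteq> AV_ops smul actA actV"
    unfolding AV_ops_Gen by (rule alg_gen_sub[OF lin_Gen C0_sub])
  show "AV_ops smul actA actV \<subseteq> alg_gen smul C0"
    unfolding AV_ops_Gen by (rule alg_gen_sub[OF lin_C0 Gen_C0])
qed

end

definition PB :: "nat \<Rightarrow> ('n::finite,'k::comm_ring_1) mpoly set" where
  "PB k = {p. keys p \<subseteq> Box k}"

lemma Box_mono: "k \<le> j \<Longrightarrow> Box k \<subseteq> Box j" by (auto simp: Box_def intro: order.trans)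
lemma Box_add: "a \<in> Box k \<Longrightarrow> b \<in> Box j \<Longrightarrow> a + b \<in> Box (k + j)"
  by (auto simp: Box_def lookup_add add_mono)
lemma Box_sub: "a \<in> Box k \<Longrightarrow> a - b \<in> Box k"
  by (auto simp: Box_def lookup_minus intro: order.trans[OF diff_le_self])

lemma PB_0[simp]: "0 \<in> PB k" by (simp add: PB_def)
lemma PB_mono: "k \<le> j \<Longrightarrow> p \<in> PB k \<Longrightarrow> p \<in> PB j" using Box_mono by (auto simp: PB_def)
lemma PB_add: "p \<in> PB k \<Longrightarrow> q \<in> PB k \<Longrightarrow> p + q \<in> PB k"
  using keys_add[of p q] by (auto simp: PB_def)
lemma PB_smul: "p \<in> PB k \<Longrightarrow> constA c * p \<in> PB k"
  unfolding PB_def subset_iff in_keys_iff constA_mult_lookup mem_Collect_eq by (metis mult_zero_right)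
lemma PB_sum: "(\<And>i. i \<in> I \<Longrightarrow> f i \<in> PB k) \<Longrightarrow> (\<Sum>i\<in>I. f i) \<in> PB k"
  by (induction I rule: infinite_finite_induct) (auto intro: PB_add)
lemma PB_mult: "p \<in> PB k \<Longrightarrow> q \<in> PB j \<Longrightarrow> p * q \<in> PB (k + j)"
  using keys_mult[of p q] Box_add by (fastforce simp: PB_def)
lemma mon_PB: "a \<in> Box k \<Longrightarrow> (mon a :: ('n::finite,'k::comm_ring_1) mpoly) \<in> PB k"
  by (simp add: PB_def mon_def)
lemma constA_PB: "(constA c :: ('n::finite,'k::comm_ring_1) mpoly) \<in> PB k"
  by (cases "c = 0") (simp_all add: PB_def constA_def)

lemma PB_exists: "\<exists>k. (p::('n::finite,'k::comm_ring_1) mpoly) \<in> PB k"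
proof -
  let ?k = "\<Sum>a\<in>keys p. \<Sum>i\<in>UNIV. lookup a i"
  have "p \<in> PB ?k" unfolding PB_def Box_def
  proof (clarify)
    fix a i assume "a \<in> keys p"
    have "lookup a i \<le> (\<Sum>i\<in>UNIV. lookup a i)" by (rule member_le_sum) auto
    also have "\<dots> \<le> ?k" by (rule member_le_sum) (use \<open>a \<in> keys p\<close> in auto)
    finally show "lookup a i \<le> ?k" .
  qed
  then show ?thesis by blast
qed

lemma finite_bound_exists:
  fixes P :: "'a \<Rightarrow> nat \<Rightarrow> bool"
  assumes "finite I" "\<And>i. i \<in> I \<Longrightarrow> \<exists>k. P i k" "\<And>i k j. P i k \<Longrightarrow> k \<le> j \<Longrightarrow> P i j"
  shows "\<exists>k. \<forall>i\<in>I. P i k"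
proof -
  obtain f where f: "\<And>i. i \<in> I \<Longrightarrow> P i (f i)" using assms(2) by metis
  have "P i (\<Sum>j\<in>I. f j)" if "i \<in> I" for i
    by (rule assms(3)[OF f[OF that]]) (rule member_le_sum[OF that _ assms(1)], simp)
  then show ?thesis by blast
qed

lemma Der_PB:
  assumes D: "(D :: ('n::finite,'k::field) mpoly \<Rightarrow> _) \<in> Der"
  shows "\<exists>e. \<forall>k p. p \<in> PB k \<longrightarrow> D p \<in> PB (k + e)"
proof -
  have "\<exists>e. \<forall>i\<in>UNIV. D (Xv i) \<in> PB e"
    by (rule finite_bound_exists) (auto intro: PB_exists PB_mono)
  then obtain e where e: "\<And>i. D (Xv i) \<in> PB e" by auto
  have "D p \<in> PB (k + e)" if p: "p \<in> PB k" for k p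
  proof -
    have "D p = lin_ext (hvf (\<lambda>i. D (Xv i))) p" by (subst Der_eq_vf[OF D]) (simp add: vf_def)
    also have "\<dots> \<in> PB (k + e)" unfolding lin_ext_def hvf_def
    proof (intro PB_sum PB_smul)
      fix a i assume a: "a \<in> keys p"
      then have "a - ev i \<in> Box k" using p Box_sub by (auto simp: PB_def)
      then show "constA (of_nat (lookup a i)) * mon (a - ev i) * D (Xv i) \<in> PB (k + e)"
        by (simp add: mult.assoc PB_smul PB_mult mon_PB e)
    qed
    finally show ?thesis .
  qed
  then show ?thesis by blast
qed

locale avmg = avm smul actA actV
  for smul :: "'k::field_char_0 \<Rightarrow> 'm::ab_group_add \<Rightarrow> 'm"
    and actA :: "('n::finite, 'k) mpoly \<Rightarrow> 'm \<Rightarrow> 'm"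
    and actV :: "(('n, 'k) mpoly \<Rightarrow> ('n, 'k) mpoly) \<Rightarrow> 'm \<Rightarrow> 'm" +
  fixes G :: "'m set"
  assumes finG: "finite G" and genG: "\<And>m. \<exists>c. m = (\<Sum>g\<in>G. actA (c g) g)"
begin

definition Fil :: "nat \<Rightarrow> 'm set" where
  "Fil k = {m. \<exists>c. (\<forall>g\<in>G. c g \<in> PB k) \<and> m = (\<Sum>g\<in>G. actA (c g) g)}"

lemma Fil_0: "0 \<in> Fil k"
  unfolding Fil_def by (rule CollectI, rule exI[of _ "\<lambda>g. 0"]) (simp add: A_zero)

lemma Fil_add: assumes "x \<in> Fil k" "y \<in> Fil k" shows "x + y \<in> Fil k"
proof -
  obtain c d where "\<forall>g\<in>G. c g \<in> PB k" "x = (\<Sum>g\<in>G. actA (c g) g)" "\<forall>g\<in>G. d g \<in> PB k" "y = (\<Sum>g\<in>G. actA (d g) g)"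
    using assms by (auto simp: Fil_def)
  then show ?thesis unfolding Fil_def
    by (intro CollectI exI[of _ "\<lambda>g. c g + d g"]) (simp add: PB_add A_add sum.distrib)
qed

lemma Fil_smul: assumes "x \<in> Fil k" shows "smul a x \<in> Fil k"
proof -
  obtain c where "\<forall>g\<in>G. c g \<in> PB k" "x = (\<Sum>g\<in>G. actA (c g) g)"
    using assms by (auto simp: Fil_def)
  then show ?thesis unfolding Fil_def
    by (intro CollectI exI[of _ "\<lambda>g. constA a * c g"]) (simp add: PB_smul A_smulp vs.scale_sum_right)
qed

lemma Fil_subspace: "vs.subspace (Fil k)"
  unfolding vs.subspace_def using Fil_0 Fil_add Fil_smul by blast

lemma Fil_sum: "(\<And>i. i \<in> I \<Longrightarrow> f i \<in> Fil k) \<Longrightarrow> (\<Sum>i\<in>I. f i) \<in> Fil k"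
  by (rule vs.subspace_sum[OF Fil_subspace])

lemma Fil_mono: "k \<le> j \<Longrightarrow> x \<in> Fil k \<Longrightarrow> x \<in> Fil j"
  unfolding Fil_def using PB_mono by blast

lemma Fil_actA: assumes "f \<in> PB j" "x \<in> Fil k" shows "actA f x \<in> Fil (k + j)"
proof -
  obtain c where "\<forall>g\<in>G. c g \<in> PB k" "x = (\<Sum>g\<in>G. actA (c g) g)"
    using assms by (auto simp: Fil_def)
  then show ?thesis unfolding Fil_def using assms(1)
    by (intro CollectI exI[of _ "\<lambda>g. f * c g"]) (simp add: PB_mult A_mult A_summ add.commute)
qed

lemma Fil_exists: "\<exists>k. x \<in> Fil k"
proof -
  obtain c where c: "x = (\<Sum>g\<in>G. actA (c g) g)" using genG by blast
  obtain k where "\<forall>g\<in>G. c g \<in> PB k"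
    using finite_bound_exists[OF finG, of "\<lambda>g k. c g \<in> PB k"] PB_exists PB_mono by blast
  then show ?thesis using c unfolding Fil_def by blast
qed

lemma G_Fil: "g \<in> G \<Longrightarrow> g \<in> Fil 0"
  unfolding Fil_def
proof (intro CollectI exI[of _ "\<lambda>h. if h = g then 1 else 0"] conjI)
  assume g: "g \<in> G"
  show "\<forall>h\<in>G. (if h = g then 1 else 0) \<in> PB 0" using constA_PB[of 1] by (simp add: PB_def)
  have "(\<Sum>h\<in>G. actA (if h = g then 1 else 0) h) = (\<Sum>h\<in>G. if h = g then g else 0)"
    by (rule sum.cong) (auto simp: A_one A_zero)
  then show "g = (\<Sum>h\<in>G. actA (if h = g then 1 else 0) h)" using g finG by simp
qed

definition Wk :: "nat \<Rightarrow> 'm set" where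
  "Wk k = (\<lambda>(a,g). actA (mon a) g) ` (Box k \<times> G)"

lemma finite_Wk: "finite (Wk k)" unfolding Wk_def by (intro finite_imageI finite_cartesian_product finite_Box finG)

lemma card_Wk: "card (Wk k) \<le> (k + 1) ^ card (UNIV::'n set) * card G"
proof -
  have "card (Wk k) \<le> card ((Box k :: ('n \<Rightarrow>\<^sub>0 nat) set) \<times> G)" unfolding Wk_def
    by (rule card_image_le) (intro finite_cartesian_product finite_Box finG)
  also have "\<dots> = (k + 1) ^ card (UNIV::'n set) * card G" by (simp add: card_cartesian_product card_Box)
  finally show ?thesis .
qed

lemma Fil_span: "Fil k \<subseteq> vs.span (Wk k)"
proof
  fix x assume "x \<in> Fil k"
  then obtain c where c: "\<forall>g\<in>G. c g \<in> PB k" "x = (\<Sum>g\<in>G. actA (c g) g)" by (auto simp: Fil_def)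
  have "actA (c g) g \<in> vs.span (Wk k)" if g: "g \<in> G" for g
  proof -
    have "actA (c g) g = (\<Sum>a\<in>keys (c g). smul (lookup (c g) a) (actA (mon a) g))"
      by (subst poly_expand'[of "c g"]) (simp add: A_sum A_smulp)
    also have "\<dots> \<in> vs.span (Wk k)"
    proof (intro vs.span_sum vs.span_scale vs.span_base)
      fix a assume "a \<in> keys (c g)"
      then have "a \<in> Box k" using c g by (auto simp: PB_def)
      then show "actA (mon a) g \<in> Wk k" unfolding Wk_def using g by force
    qed
    finally show ?thesis .
  qed
  then show "x \<in> vs.span (Wk k)" using c by (auto intro: vs.span_sum)
qed

definition shifts :: "('m \<Rightarrow> 'm) \<Rightarrow> nat \<Rightarrow> bool" where
  "shifts T b \<longleftrightarrow> (\<forall>k. \<forall>x\<in>Fil k. T x \<in> Fil (k + b))"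

lemma shifts_mono: "shifts T b \<Longrightarrow> b \<le> b' \<Longrightarrow> shifts T b'"
  unfolding shifts_def using Fil_mono by (meson add_le_mono order_refl)

lemma shifts_subspace: "om.subspace {T. shifts T b}"
  unfolding om.subspace_def shifts_def
  by (auto simp: Fil_0 Fil_add Fil_smul)

lemma shifts_ex_subspace: "om.subspace {T. \<exists>b. shifts T b}"
  unfolding om.subspace_def
proof (intro conjI ballI allI)
  show "0 \<in> {T. \<exists>b. shifts T b}" by (auto simp: shifts_def Fil_0)
  fix x y assume "x \<in> {T. \<exists>b. shifts T b}" "y \<in> {T. \<exists>b. shifts T b}"
  then obtain b1 b2 where "shifts x b1" "shifts y b2" by auto
  then have "shifts x (b1 + b2)" "shifts y (b1 + b2)" by (auto elim: shifts_mono)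
  then show "x + y \<in> {T. \<exists>b. shifts T b}" unfolding shifts_def by (auto intro!: exI[of _ "b1+b2"] Fil_add)
next
  fix c x assume "x \<in> {T. \<exists>b. shifts T b}"
  then obtain b where "shifts x b" by auto
  then show "op_smul smul c x \<in> {T. \<exists>b. shifts T b}" unfolding shifts_def by (auto intro!: exI[of _ b] Fil_smul)
qed

lemma shifts_comp: "shifts S b \<Longrightarrow> shifts T b' \<Longrightarrow> shifts (S \<circ> T) (b' + b)"
  unfolding shifts_def by (metis add.assoc comp_apply)

lemma shifts_id: "shifts id 0" by (simp add: shifts_def)

lemma shifts_actA: "\<exists>b. shifts (actA f) b"
proof -
  obtain j where "f \<in> PB j" using PB_exists by blast
  then show ?thesis unfolding shifts_def using Fil_actA by blast
qed

lemma shifts_actV: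
  assumes D: "D \<in> Der"
  shows "\<exists>b. shifts (actV D) b"
proof -
  obtain e where e: "\<forall>k p. p \<in> PB k \<longrightarrow> D p \<in> PB (k + e)" using Der_PB[OF D] by blast
  obtain s where s: "\<forall>g\<in>G. actV D g \<in> Fil s"
    using finite_bound_exists[OF finG, of "\<lambda>g k. actV D g \<in> Fil k"] Fil_exists Fil_mono by blast
  have "actV D x \<in> Fil (k + (e + s))" if x: "x \<in> Fil k" for k x
  proof -
    obtain c where c: "\<forall>g\<in>G. c g \<in> PB k" "x = (\<Sum>g\<in>G. actA (c g) g)" using x by (auto simp: Fil_def)
    have "actV D x = (\<Sum>g\<in>G. actA (D (c g)) g + actA (c g) (actV D g))"
      by (simp add: c V_summ[OF D] V_comp[OF D])
    also have "\<dots> \<in> Fil (k + (e + s))"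
    proof (intro Fil_sum Fil_add)
      fix g assume g: "g \<in> G"
      have "actA (D (c g)) g \<in> Fil (0 + (k + e))" using Fil_actA[OF _ G_Fil[OF g]] e c g by blast
      then show "actA (D (c g)) g \<in> Fil (k + (e + s))" by (rule Fil_mono[rotated]) simp
      have "actA (c g) (actV D g) \<in> Fil (s + k)" using Fil_actA s c g by blast
      then show "actA (c g) (actV D g) \<in> Fil (k + (e + s))" by (rule Fil_mono[rotated]) simp
    qed
    finally show ?thesis .
  qed
  then show ?thesis unfolding shifts_def by blast
qed

lemma shifts_Gen: "x \<in> Gen \<Longrightarrow> \<exists>b. shifts x b"
  unfolding Gen_def using shifts_actA shifts_actV by auto

lemma shifts_AV_ops: "T \<in> AV_ops smul actA actV \<Longrightarrow> \<exists>b. shifts T b"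
  unfolding AV_ops_Gen alg_gen_words
proof (erule om.span_subspace_induct[OF _ shifts_ex_subspace, simplified])
  fix x assume "x \<in> words Gen"
  then obtain ws where ws: "x = foldr (\<circ>) ws id" "set ws \<subseteq> Gen" by (auto simp: words_def)
  have "\<exists>b. shifts (foldr (\<circ>) ws id) b" using ws(2)
  proof (induction ws)
    case Nil then show ?case by (rule_tac exI[of _ 0]) (simp add: shifts_def)
  next
    case (Cons w ws)
    from Cons.prems have "w \<in> Gen" "set ws \<subseteq> Gen" by auto
    then obtain b b' where "shifts w b" "shifts (foldr (\<circ>) ws id) b'" using shifts_Gen Cons.IH by blast
    then have "shifts (w \<circ> foldr (\<circ>) ws id) (b' + b)" by (rule shifts_comp)
    then have "shifts (foldr (\<circ>) (w # ws) id) (b' + b)" by (simp only: foldr_Cons comp_apply)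
    then show ?case by blast
  qed
  then show "\<exists>b. shifts x b" using ws by simp
qed

lemma shifts_C:
  assumes "fin_dim_subspace (op_smul smul) C" "C \<subseteq> AV_ops smul actA actV"
  shows "\<exists>b. \<forall>T\<in>C. shifts T b"
proof -
  obtain B where B: "finite B" "C = om.span B" using assms(1) by (auto simp: fin_dim_subspace_def)
  have "B \<subseteq> AV_ops smul actA actV" using B assms(2) om.span_superset by blast
  then obtain b where b: "\<forall>T\<in>B. shifts T b"
    using finite_bound_exists[OF B(1), of "\<lambda>T b. shifts T b"] shifts_AV_ops shifts_mono by blast
  have "T \<in> {T. shifts T b}" if "T \<in> C" for T
    using that unfolding B(2) by (rule om.span_subspace_induct[OF _ shifts_subspace]) (use b in auto)
  then show ?thesis by blast
qed

lemma M0_Fil: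
  assumes "fin_dim_subspace smul M0"
  shows "\<exists>k0. M0 \<subseteq> Fil k0"
proof -
  obtain B where B: "finite B" "M0 = vs.span B" using assms by (auto simp: fin_dim_subspace_def)
  obtain k0 where "\<forall>x\<in>B. x \<in> Fil k0"
    using finite_bound_exists[OF B(1), of "\<lambda>x k. x \<in> Fil k"] Fil_exists Fil_mono by blast
  then have "M0 \<subseteq> Fil k0" unfolding B(2) by (intro vs.span_minimal Fil_subspace) auto
  then show ?thesis by blast
qed

lemma pow_Fil:
  assumes "\<forall>T\<in>C. shifts T b" "M0 \<subseteq> Fil k0"
  shows "pow_apply smul C M0 m \<subseteq> Fil (k0 + m * b)"
proof (induction m)
  case 0
  then show ?case using assms(2) by (simp add: vs.span_minimal Fil_subspace)
next
  case (Suc m)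
  have "T x \<in> Fil (k0 + Suc m * b)" if "T \<in> C" "x \<in> pow_apply smul C M0 m" for T x
  proof -
    have "x \<in> Fil (k0 + m * b)" using Suc that by blast
    then have "T x \<in> Fil (k0 + m * b + b)" using assms(1) that(1) unfolding shifts_def by blast
    moreover have "k0 + m * b + b = k0 + Suc m * b" by simp
    ultimately show ?thesis by simp
  qed
  then have "(\<Union>T\<in>C. T ` pow_apply smul C M0 m) \<subseteq> Fil (k0 + Suc m * b)" by blast
  then show ?case by (simp add: vs.span_minimal Fil_subspace)
qed

lemma dim_pow_upper:
  assumes "\<forall>T\<in>C. shifts T b" "M0 \<subseteq> Fil k0"
  shows "vs.dim (pow_apply smul C M0 m) \<le> (k0 + m * b + 1) ^ card (UNIV::'n set) * card G"
proof -
  have "pow_apply smul C M0 m \<subseteq> vs.span (Wk (k0 + m * b))"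
    using pow_Fil[OF assms] Fil_span by blast
  then have "vs.dim (pow_apply smul C M0 m) \<le> card (Wk (k0 + m * b))"
    by (rule vs.dim_le_card[OF _ finite_Wk])
  also have "\<dots> \<le> (k0 + m * b + 1) ^ card (UNIV::'n set) * card G" by (rule card_Wk)
  finally show ?thesis .
qed

end

definition dg :: "('n::finite,'k::comm_ring_1) mpoly \<Rightarrow> nat" where
  "dg f = Max (insert 0 (tdeg ` keys f))"

lemma dg_ge: "a \<in> keys f \<Longrightarrow> tdeg a \<le> dg f"
  unfolding dg_def by (rule Max_ge) auto

lemma dg_attained: "f \<noteq> 0 \<Longrightarrow> \<exists>a\<in>keys f. tdeg a = dg f"
proof -
  assume "f \<noteq> 0"
  then have ne: "keys f \<noteq> {}" by simp
  have "dg f \<in> insert 0 (tdeg ` keys f)" unfolding dg_def by (rule Max_in) auto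
  then show ?thesis
  proof
    assume "dg f = 0"
    then show ?thesis using ne dg_ge by fastforce
  qed auto
qed

lemma dg_less:
  assumes "\<And>a. a \<in> keys g \<Longrightarrow> tdeg a < d" "0 < d"
  shows "dg g < d"
  unfolding dg_def using assms by (subst Max_less_iff) auto

lemma lookup_constA_mon: "lookup (constA c * mon b) t = (if b = t then c else 0)"
  by (simp add: constA_mult_lookup mon_def lookup_single when_def)

lemma d_expand: "(Vf 0 i f :: ('n::finite,'k::comm_ring_1) mpoly)
   = (\<Sum>a\<in>keys f. constA (lookup f a * of_nat (lookup a i)) * mon (a - ev i))"
proof -
  have "Vf 0 i f = lin_ext (\<lambda>a. Vf 0 i (mon a)) f" by (simp add: Vf_def vf_def)
  then show ?thesis by (simp add: lin_ext_def Vf_mon constA_mult mult.assoc)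
qed

lemma d_keys:
  assumes "t \<in> keys (Vf 0 i f :: ('n::finite,'k::comm_ring_1) mpoly)"
  shows "\<exists>a\<in>keys f. 0 < lookup a i \<and> t = a - ev i"
proof (rule ccontr)
  assume na: "\<not> ?thesis"
  have "lookup (Vf 0 i f) t = (\<Sum>a\<in>keys f. if a - ev i = t then lookup f a * of_nat (lookup a i) else 0)"
    by (simp add: d_expand Poly_Mapping.lookup_sum lookup_constA_mon)
  also have "\<dots> = 0" using na by (intro sum.neutral) auto
  finally show False using assms by (simp add: in_keys_iff)
qed

lemma d_lookup:
  assumes a0: "a0 \<in> keys f" "0 < lookup a0 i"
  shows "lookup (Vf 0 i f :: ('n::finite,'k::field_char_0) mpoly) (a0 - ev i) = lookup f a0 * of_nat (lookup a0 i)"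
proof -
  have "lookup (Vf 0 i f) (a0 - ev i) = (\<Sum>a\<in>keys f. if a - ev i = a0 - ev i then lookup f a * of_nat (lookup a i) else 0)"
    by (simp add: d_expand Poly_Mapping.lookup_sum lookup_constA_mon)
  also have "\<dots> = (\<Sum>a\<in>keys f. if a = a0 then lookup f a0 * of_nat (lookup a0 i) else 0)"
  proof (rule sum.cong[OF refl])
    fix a assume "a \<in> keys f"
    show "(if a - ev i = a0 - ev i then lookup f a * of_nat (lookup a i) else 0)
        = (if a = a0 then lookup f a0 * of_nat (lookup a0 i) else 0)"
    proof (cases "lookup a i = 0")
      case True then show ?thesis using a0 by auto
    next
      case False
      then have "a - ev i = a0 - ev i \<Longrightarrow> a = a0" using a0 sub_ev_add
        by (metis gr0I)
      then show ?thesis by auto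
    qed
  qed
  also have "\<dots> = lookup f a0 * of_nat (lookup a0 i)" using a0 by simp
  finally show ?thesis .
qed

lemma deriv_step:
  assumes f: "(f :: ('n::finite,'k::field_char_0) mpoly) \<noteq> 0" and d: "0 < dg f"
  shows "\<exists>i. Vf 0 i f \<noteq> 0 \<and> dg (Vf 0 i f) < dg f"
proof -
  obtain a0 where a0: "a0 \<in> keys f" "tdeg a0 = dg f" using dg_attained[OF f] by blast
  then have "a0 \<noteq> 0" using d by (auto simp: tdeg_def)
  then obtain i where i: "0 < lookup a0 i" by (metis nonzero_decomp)
  have "lookup (Vf 0 i f) (a0 - ev i) \<noteq> 0" using d_lookup[OF a0(1) i] a0(1) i by (simp add: in_keys_iff)
  then have "Vf 0 i f \<noteq> 0" by auto
  moreover have "dg (Vf 0 i f) < dg f"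
  proof (rule dg_less[OF _ d])
    fix t assume "t \<in> keys (Vf 0 i f)"
    then obtain a where a: "a \<in> keys f" "0 < lookup a i" "t = a - ev i" using d_keys by blast
    then show "tdeg t < dg f" using tdeg_sub_ev[OF a(2)] dg_ge[OF a(1)] by simp
  qed
  ultimately show ?thesis by blast
qed

lemma dg0_const:
  assumes "dg (f :: ('n::finite,'k::comm_ring_1) mpoly) = 0"
  shows "f = constA (lookup f 0)"
proof -
  have "keys f \<subseteq> {0}"
  proof
    fix a assume "a \<in> keys f"
    then have "tdeg a = 0" using dg_ge[of a f] assms by simp
    then show "a \<in> {0}" by (auto simp: tdeg_def intro!: poly_mapping_eqI)
  qed
  then have "f = (\<Sum>a\<in>{0}. constA (lookup f a) * mon a)"
    by (subst poly_expand') (rule sum.mono_neutral_left, auto simp: in_keys_iff)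
  then show ?thesis by simp
qed

context avmg begin

lemma ann_zero:
  fixes x :: 'm
  assumes "\<And>x. actA f x = 0" "f \<noteq> 0"
  shows "x = 0"
  using assms
proof (induction "dg f" arbitrary: f rule: less_induct)
  case less
  show ?case
  proof (cases "dg f = 0")
    case True
    have fc: "f = constA (lookup f 0)" by (rule dg0_const[OF True])
    then have "lookup f 0 \<noteq> 0" using less.prems(2) by (metis constA_0)
    moreover have "smul (lookup f 0) x = 0" using less.prems(1)[of x] fc by (metis A_const)
    ultimately show ?thesis by simp
  next
    case False
    then obtain i where i: "Vf 0 i f \<noteq> 0" "dg (Vf 0 i f) < dg f"
      using deriv_step[OF less.prems(2)] by auto
    have "actA (Vf 0 i f) y = 0" for y
      using V_comp[OF Vf_Der, of 0 i f y] less.prems(1) V_zerom[OF Vf_Der] by simp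
    then show ?thesis using less.hyps[OF i(2)] i(1) by blast
  qed
qed

lemma ann_G:
  assumes "\<And>g. g \<in> G \<Longrightarrow> actA f g = 0"
  shows "actA f x = 0"
proof -
  obtain c where c: "x = (\<Sum>g\<in>G. actA (c g) g)" using genG by blast
  have "actA f x = (\<Sum>g\<in>G. actA (c g) (actA f g))" by (simp add: c A_summ A_comm)
  also have "\<dots> = 0" using assms by (simp add: A_zerom)
  finally show ?thesis .
qed

lemma Box_decomp:
  fixes a :: "'n \<Rightarrow>\<^sub>0 nat"
  assumes "a \<in> Box (Suc m)"
  shows "\<exists>a1\<in>Box 1. \<exists>a2\<in>Box m. a = a1 + a2"
proof -
  let ?f = "\<lambda>i. if 0 < lookup a i then 1 else (0::nat)"
  let ?a1 = "Abs_poly_mapping ?f :: 'n \<Rightarrow>\<^sub>0 nat"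
  have l1: "lookup ?a1 = ?f" by (simp add: Abs_poly_mapping_inverse)
  have "?a1 \<in> Box 1" by (simp add: Box_def l1)
  moreover have "a - ?a1 \<in> Box m" using assms by (auto simp: Box_def lookup_minus l1 le_diff_conv)
  moreover have "a = ?a1 + (a - ?a1)" by (rule poly_mapping_eqI) (simp add: lookup_add lookup_minus l1)
  ultimately show ?thesis by blast
qed

lemma pow_lower:
  assumes "a \<in> Box m" "g \<in> G"
  shows "actA (mon a) g \<in> pow_apply smul C0 (vs.span G) m"
  using assms(1)
proof (induction m arbitrary: a)
  case 0
  then have "a = 0" by (auto simp: Box_def intro!: poly_mapping_eqI)
  then show ?case using assms(2) by (simp add: A_one vs.span_base)
next
  case (Suc m)
  obtain a1 a2 where a: "a1 \<in> Box 1" "a2 \<in> Box m" "a = a1 + a2" using Box_decomp[OF Suc.prems] by blast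
  have "actA (mon a1) \<in> C0" unfolding C0_def S0_def using a(1) by (intro om.span_base) blast
  moreover have "actA (mon a2) g \<in> pow_apply smul C0 (vs.span G) m" using Suc.IH a(2) by blast
  ultimately have "actA (mon a1) (actA (mon a2) g) \<in> (\<Union>T\<in>C0. T ` pow_apply smul C0 (vs.span G) m)" by blast
  then have "actA (mon a) g \<in> (\<Union>T\<in>C0. T ` pow_apply smul C0 (vs.span G) m)"
    by (simp only: a(3) mon_add A_mult)
  then show ?case by (simp only: pow_apply.simps) (rule vs.span_base)
qed

end

context avmg begin

lemma A_diff: "actA (f - h) x = actA f x - actA h x"
  using A_add[of "f - h" h x] by (simp add: eq_diff_eq)

lemma fin_C0: "fin_dim_subspace (op_smul smul) C0"
  unfolding fin_dim_subspace_def C0_def using finite_S0 by blast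

lemma C0_AV: "C0 \<subseteq> AV_ops smul actA actV" using C0_sub AV_ops_Gen by simp

lemma spanG_Fil: "vs.span G \<subseteq> Fil 0"
  by (intro vs.span_minimal Fil_subspace) (use G_Fil in auto)

lemma pow_C0_span: "\<exists>K. pow_apply smul C0 (vs.span G) m \<subseteq> vs.span (Wk K)"
proof -
  obtain b where "\<forall>T\<in>C0. shifts T b" using shifts_C[OF fin_C0 C0_AV] by blast
  then have "pow_apply smul C0 (vs.span G) m \<subseteq> Fil (0 + m * b)" by (rule pow_Fil[OF _ spanG_Fil])
  then show ?thesis using Fil_span by blast
qed

definition vv :: "('n \<Rightarrow>\<^sub>0 nat) \<Rightarrow> 'm \<Rightarrow> 'm" where
  "vv a = (\<lambda>x. if x \<in> G then actA (mon a) x else 0)"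

definition dl :: "'m \<Rightarrow> 'm \<Rightarrow> 'm \<Rightarrow> 'm" where
  "dl g y = (\<lambda>x. if x = g then y else 0)"

lemma vv_sum: "vv a = (\<Sum>g\<in>G. dl g (actA (mon a) g))"
proof
  fix x
  have "(\<Sum>g\<in>G. dl g (actA (mon a) g)) x = (\<Sum>g\<in>G. if x = g then actA (mon a) g else 0)"
    by (simp add: sum_fun_app dl_def)
  also have "\<dots> = vv a x" using finG by (simp add: vv_def)
  finally show "vv a x = (\<Sum>g\<in>G. dl g (actA (mon a) g)) x" by simp
qed

lemma dl_span:
  assumes "y \<in> vs.span B"
  shows "dl g y \<in> om.span ((\<lambda>y. dl g y) ` B)"
proof -
  have "y \<in> {y. dl g y \<in> om.span ((\<lambda>y. dl g y) ` B)}"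
    using assms
  proof (rule vs.span_subspace_induct)
    show "vs.subspace {y. dl g y \<in> om.span ((\<lambda>y. dl g y) ` B)}"
      unfolding vs.subspace_def
    proof (intro conjI allI ballI)
      have "dl g 0 = 0" by (simp add: dl_def fun_eq_iff)
      then show "0 \<in> {y. dl g y \<in> om.span ((\<lambda>y. dl g y) ` B)}" using om.span_zero by auto
      fix x y assume "x \<in> {y. dl g y \<in> om.span ((\<lambda>y. dl g y) ` B)}" "y \<in> {y. dl g y \<in> om.span ((\<lambda>y. dl g y) ` B)}"
      moreover have "dl g (x + y) = dl g x + dl g y" by (simp add: dl_def fun_eq_iff)
      ultimately show "x + y \<in> {y. dl g y \<in> om.span ((\<lambda>y. dl g y) ` B)}" by (simp add: om.span_add)
    next
      fix c x assume "x \<in> {y. dl g y \<in> om.span ((\<lambda>y. dl g y) ` B)}"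
      moreover have "dl g (smul c x) = op_smul smul c (dl g x)" by (simp add: dl_def fun_eq_iff)
      ultimately show "smul c x \<in> {y. dl g y \<in> om.span ((\<lambda>y. dl g y) ` B)}" by (simp add: om.span_scale)
    qed
    fix x assume "x \<in> B" then show "x \<in> {y. dl g y \<in> om.span ((\<lambda>y. dl g y) ` B)}"
      by (simp add: om.span_base)
  qed
  then show ?thesis by simp
qed

lemma lookup_sum_mon:
  assumes "finite S" "a0 \<in> S"
  shows "lookup (\<Sum>a\<in>S. constA (u a) * mon a) a0 = u a0"
  using assms by (simp add: Poly_Mapping.lookup_sum lookup_constA_mon)

lemma mon_inj: assumes "(mon a :: ('n,'k) mpoly) = mon b" shows "a = b"
proof -
  have "lookup (mon a :: ('n,'k) mpoly) a = 1" by (simp add: mon_def)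
  then have "lookup (mon b :: ('n,'k) mpoly) a = 1" using assms by simp
  then show ?thesis by (simp add: mon_def lookup_single when_def split: if_splits)
qed

lemma vv_inj:
  assumes nz: "(y::'m) \<noteq> 0"
  shows "inj vv"
proof (rule injI)
  fix a b assume "vv a = vv b"
  then have "actA (mon a - mon b) g = 0" if "g \<in> G" for g
  proof -
    have "vv a g = vv b g" using \<open>vv a = vv b\<close> by simp
    then show ?thesis using that by (simp add: vv_def A_diff)
  qed
  then have "actA (mon a - mon b) x = 0" for x by (rule ann_G)
  then have "mon a - mon b = (0 :: ('n,'k) mpoly)" using ann_zero nz by blast
  then show "a = b" by (simp add: mon_inj)
qed

lemma vv_indep:
  assumes nz: "(y::'m) \<noteq> 0" and fS: "finite S"
  shows "om.independent (vv ` S)"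
proof -
  have "\<not> om.dependent (vv ` S)"
  proof
    assume "om.dependent (vv ` S)"
    have fin: "finite (vv ` S)" using fS by simp
    have "\<exists>u. (\<exists>w\<in>vv ` S. u w \<noteq> 0) \<and> (\<Sum>w\<in>vv ` S. op_smul smul (u w) w) = 0"
      by (rule iffD1[OF om.dependent_finite[OF fin] \<open>om.dependent (vv ` S)\<close>])
    then obtain u where uu: "(\<exists>w\<in>vv ` S. u w \<noteq> 0) \<and> (\<Sum>w\<in>vv ` S. op_smul smul (u w) w) = 0"
      by (rule exE)
    note u = conjunct1[OF uu] conjunct2[OF uu]
    have inj: "inj_on vv S" using vv_inj[OF nz] by (simp add: inj_on_def inj_def)
    have s0: "(\<Sum>a\<in>S. op_smul smul (u (vv a)) (vv a)) = 0"
      using u(2) sum.reindex[OF inj, of "\<lambda>w. op_smul smul (u w) w"] by (simp add: comp_def)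
    let ?F = "\<Sum>a\<in>S. constA (u (vv a)) * mon a"
    have "actA ?F g = 0" if g: "g \<in> G" for g
    proof -
      have "actA ?F g = (\<Sum>a\<in>S. smul (u (vv a)) (actA (mon a) g))" by (simp add: A_sum A_smulp)
      also have "\<dots> = (\<Sum>a\<in>S. op_smul smul (u (vv a)) (vv a)) g"
        unfolding sum_fun_app op_smul_apply vv_def using g by simp
      also have "\<dots> = 0" using s0 by simp
      finally show ?thesis .
    qed
    then have AF: "actA ?F x = 0" for x by (rule ann_G)
    have F0: "?F = 0"
    proof (rule ccontr)
      assume "?F \<noteq> 0"
      then have "y = 0" by (rule ann_zero[OF AF])
      then show False using nz by simp
    qed
    obtain w where w: "w \<in> vv ` S" "u w \<noteq> 0" using u(1) by blast
    then obtain a0 where a0: "a0 \<in> S" "u (vv a0) \<noteq> 0" by blast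
    have "u (vv a0) = lookup ?F a0" by (rule sym, rule lookup_sum_mon[OF fS a0(1)])
    also have "\<dots> = 0" by (simp only: F0 lookup_zero)
    finally show False using a0(2) by blast
  qed
  then show ?thesis by simp
qed

lemma dim_pow_lower:
  assumes nz: "(y::'m) \<noteq> 0"
  shows "(m + 1) ^ card (UNIV::'n set) \<le> card G * vs.dim (pow_apply smul C0 (vs.span G) m)"
proof -
  let ?P = "pow_apply smul C0 (vs.span G) m"
  obtain K where PK: "?P \<subseteq> vs.span (Wk K)" using pow_C0_span by blast
  obtain B where B: "B \<subseteq> ?P" "vs.independent B" "?P \<subseteq> vs.span B" "card B = vs.dim ?P"
    by (rule vs.basis_exists)
  have finB: "finite B" using vs.independent_span_bound[OF finite_Wk B(2)] B(1) PK by blast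
  let ?E = "(\<lambda>(g,y). dl g y) ` (G \<times> B)"
  have finE: "finite ?E" using finB finG by simp
  have cardE: "card ?E \<le> card G * card B"
    using card_image_le[of "G \<times> B" "\<lambda>(g,y). dl g y"] finB finG by (simp add: card_cartesian_product)
  have vvE: "vv ` Box m \<subseteq> om.span ?E"
  proof
    fix w assume "w \<in> vv ` Box m"
    then obtain a where a: "a \<in> Box m" "w = vv a" by blast
    have "dl g (actA (mon a) g) \<in> om.span ?E" if g: "g \<in> G" for g
    proof -
      have "actA (mon a) g \<in> vs.span B" using pow_lower[OF a(1) g] B(3) by blast
      then have "dl g (actA (mon a) g) \<in> om.span ((\<lambda>y. dl g y) ` B)" by (rule dl_span)
      moreover have "(\<lambda>y. dl g y) ` B \<subseteq> ?E" using g by auto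
      ultimately show ?thesis using om.span_mono by blast
    qed
    then show "w \<in> om.span ?E" unfolding a(2) vv_sum by (intro om.span_sum)
  qed
  have "card (vv ` Box m) \<le> card ?E"
    using om.independent_span_bound[OF finE vv_indep[OF nz finite_Box] vvE] by blast
  moreover have "card (vv ` Box m) = card (Box m :: ('n \<Rightarrow>\<^sub>0 nat) set)"
    using vv_inj[OF nz] by (simp add: card_image inj_on_def inj_def)
  ultimately have "card (Box m :: ('n \<Rightarrow>\<^sub>0 nat) set) \<le> card G * card B" using cardE by linarith
  moreover have "card (Box m :: ('n \<Rightarrow>\<^sub>0 nat) set) = (m+1) ^ card (UNIV::'n set)" by (rule card_Box)
  ultimately show ?thesis using B(4) by simp
qed

end

lemma inv_ln_0: "((\<lambda>m::nat. inverse (ln (real m))) \<longlongrightarrow> 0) sequentially"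
  by (rule tendsto_inverse_0_at_top[OF filterlim_compose[OF ln_at_top filterlim_real_sequentially]])

lemma lnratio:
  fixes b c :: real
  assumes b: "b > 0" and c: "c \<ge> 0"
  shows "((\<lambda>m::nat. ln (real m * b + c) / ln (real m)) \<longlongrightarrow> 1) sequentially"
proof -
  have l1: "((\<lambda>m::nat. ln (b + c / real m)) \<longlongrightarrow> ln (b + 0)) sequentially"
    by (intro tendsto_ln tendsto_add tendsto_const lim_const_over_n) (use b in simp)
  have l2: "((\<lambda>m::nat. 1 + ln (b + c / real m) * inverse (ln (real m))) \<longlongrightarrow> 1 + ln (b + 0) * 0) sequentially"
    by (intro tendsto_add tendsto_const tendsto_mult l1 inv_ln_0)
  have ev: "eventually (\<lambda>m::nat. 1 + ln (b + c / real m) * inverse (ln (real m)) = ln (real m * b + c) / ln (real m)) sequentially"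
    unfolding eventually_sequentially
  proof (intro exI[of _ 2] allI impI)
    fix m :: nat assume m: "2 \<le> m"
    then have mpos: "real m > 0" and lnpos: "ln (real m) > 0" by auto
    have pos: "b + c / real m > 0" using b c mpos by (simp add: add_pos_nonneg)
    have "real m * b + c = real m * (b + c / real m)" using mpos by (simp add: field_simps)
    then have "ln (real m * b + c) = ln (real m) + ln (b + c / real m)"
      using mpos pos by (simp add: ln_mult)
    then show "1 + ln (b + c / real m) * inverse (ln (real m)) = ln (real m * b + c) / ln (real m)"
      using lnpos by (simp add: field_simps)
  qed
  show ?thesis using tendsto_cong[OF ev] l2 by simp
qed

lemma upper_lim:
  fixes g b k :: real
  assumes g: "g > 0" and b: "b > 0" and k: "k \<ge> 0"
  shows "((\<lambda>m::nat. log (real m) (g * (real m * b + k) ^ n)) \<longlongrightarrow> real n) sequentially"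
proof -
  have l: "((\<lambda>m::nat. ln g * inverse (ln (real m)) + real n * (ln (real m * b + k) / ln (real m)))
      \<longlongrightarrow> ln g * 0 + real n * 1) sequentially"
    by (intro tendsto_add tendsto_mult tendsto_const inv_ln_0 lnratio b k)
  have ev: "eventually (\<lambda>m::nat. ln g * inverse (ln (real m)) + real n * (ln (real m * b + k) / ln (real m))
      = log (real m) (g * (real m * b + k) ^ n)) sequentially"
    unfolding eventually_sequentially
  proof (intro exI[of _ 2] allI impI)
    fix m :: nat assume m: "2 \<le> m"
    then have mpos: "real m > 0" by auto
    have pos: "real m * b + k > 0" using b k mpos by (simp add: add_pos_nonneg)
    show "ln g * inverse (ln (real m)) + real n * (ln (real m * b + k) / ln (real m))
      = log (real m) (g * (real m * b + k) ^ n)"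
    proof -
      have "ln (g * (real m * b + k) ^ n) = ln g + real n * ln (real m * b + k)"
        using g pos by (simp add: ln_mult ln_realpow)
      then show ?thesis by (simp add: log_def divide_inverse algebra_simps)
    qed
  qed
  show ?thesis using tendsto_cong[OF ev] l by simp
qed

lemma lower_lim:
  fixes g :: real
  assumes g: "g > 0"
  shows "((\<lambda>m::nat. log (real m) ((real m + 1) ^ n / g)) \<longlongrightarrow> real n) sequentially"
proof -
  have l: "((\<lambda>m::nat. real n * (ln (real m * 1 + 1) / ln (real m)) - ln g * inverse (ln (real m)))
      \<longlongrightarrow> real n * 1 - ln g * 0) sequentially"
    by (intro tendsto_diff tendsto_mult tendsto_const inv_ln_0 lnratio) simp_all
  have ev: "eventually (\<lambda>m::nat. real n * (ln (real m * 1 + 1) / ln (real m)) - ln g * inverse (ln (real m))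
      = log (real m) ((real m + 1) ^ n / g)) sequentially"
    unfolding eventually_sequentially
  proof (intro exI[of _ 2] allI impI)
    fix m :: nat assume m: "2 \<le> m"
    have pos: "real m + 1 > 0" by simp
    show "real n * (ln (real m * 1 + 1) / ln (real m)) - ln g * inverse (ln (real m))
      = log (real m) ((real m + 1) ^ n / g)"
    proof -
      have eq: "ln ((real m + 1) ^ n / g) = real n * ln (real m + 1) - ln g"
        using g pos by (simp add: ln_div ln_realpow)
      show ?thesis unfolding log_def eq by (simp add: divide_inverse algebra_simps)
    qed
  qed
  show ?thesis using tendsto_cong[OF ev] l by simp
qed

lemma log_le_helper:
  fixes d U :: real
  assumes "2 \<le> m" "0 \<le> d" "d \<le> U" "1 \<le> U"
  shows "log (real m) d \<le> log (real m) U"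
proof (cases "d = 0")
  case True
  have "0 \<le> log (real m) U" using assms by simp
  then show ?thesis using True by (simp add: log_def)
next
  case False
  then show ?thesis using assms by (intro log_mono) auto
qed

context avmg begin

lemma actA_AV: "actA f \<in> AV_ops smul actA actV"
  unfolding AV_ops_Gen by (rule gen_in_alg_gen) (simp add: Gen_def)

lemma span_gen_UNIV: "vs.span (\<Union>T\<in>AV_ops smul actA actV. T ` M0) = UNIV" if "G \<subseteq> M0"
proof -
  have "x \<in> vs.span (\<Union>T\<in>AV_ops smul actA actV. T ` M0)" for x
  proof -
    obtain c where c: "x = (\<Sum>g\<in>G. actA (c g) g)" using genG by blast
    show ?thesis unfolding c
      by (intro vs.span_sum vs.span_base) (use actA_AV that in blast)
  qed
  then show ?thesis by auto
qed

lemma fgAV: "fg_AV_module smul actA actV"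
  unfolding fg_AV_module_def using finG span_gen_UNIV[of G] by blast

lemma pair_in: "(C0, vs.span G) \<in> gen_pairs smul actA actV"
proof -
  have "actA (mon 0) = id" by (simp add: fun_eq_iff A_one)
  moreover have "actA (mon 0) \<in> C0" unfolding C0_def S0_def
    by (rule om.span_base) (use zero_Box[of 1] in blast)
  ultimately have "id \<in> C0" by simp
  moreover have "vs.span (\<Union>T\<in>AV_ops smul actA actV. T ` vs.span G) = UNIV"
    by (rule span_gen_UNIV) (rule vs.span_superset)
  moreover have "fin_dim_subspace smul (vs.span G)" unfolding fin_dim_subspace_def using finG by blast
  ultimately show ?thesis unfolding gen_pairs_def using fin_C0 C0_AV AV_ops_C0 by auto
qed

lemma growth_upper:
  assumes "(C, M0) \<in> gen_pairs smul actA actV"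
  shows "gk_growth smul C M0 \<le> ereal (real (card (UNIV::'n set)))"
proof -
  let ?n = "card (UNIV::'n set)"
  have C: "fin_dim_subspace (op_smul smul) C" "C \<subseteq> AV_ops smul actA actV" and M0: "fin_dim_subspace smul M0"
    using assms by (auto simp: gen_pairs_def)
  obtain b where "\<forall>T\<in>C. shifts T b" using shifts_C[OF C] by blast
  then have b: "\<forall>T\<in>C. shifts T (b + 1)" using shifts_mono by auto
  obtain k0 where k0: "M0 \<subseteq> Fil k0" using M0_Fil[OF M0] by blast
  let ?U = "\<lambda>m::nat. log (real m) ((real (card G) + 1) * (real m * real (b + 1) + real (k0 + 1)) ^ ?n)"
  have ev: "eventually (\<lambda>m. ereal (log (real m) (real (vs.dim (pow_apply smul C M0 m)))) \<le> ereal (?U m)) sequentially"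
    unfolding eventually_sequentially
  proof (intro exI[of _ 2] allI impI)
    fix m :: nat assume m: "2 \<le> m"
    have d: "vs.dim (pow_apply smul C M0 m) \<le> (k0 + m * (b + 1) + 1) ^ ?n * card G"
      by (rule dim_pow_upper[OF b k0])
    have "real (vs.dim (pow_apply smul C M0 m)) \<le> real ((k0 + m * (b + 1) + 1) ^ ?n * card G)"
      using d by linarith
    also have "\<dots> = (real m * real (b + 1) + real (k0 + 1)) ^ ?n * real (card G)"
      by (simp add: algebra_simps)
    also have "\<dots> \<le> (real (card G) + 1) * (real m * real (b + 1) + real (k0 + 1)) ^ ?n"
      by (simp add: algebra_simps)
    finally have le: "real (vs.dim (pow_apply smul C M0 m)) \<le> (real (card G) + 1) * (real m * real (b + 1) + real (k0 + 1)) ^ ?n" .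
    have ge1: "1 \<le> (real (card G) + 1) * (real m * real (b + 1) + real (k0 + 1)) ^ ?n"
    proof -
      have "1 \<le> (real m * real (b + 1) + real (k0 + 1)) ^ ?n" by (intro one_le_power) simp
      moreover have "1 \<le> real (card G) + 1" by simp
      ultimately show ?thesis by (metis mult_mono mult_1 order.trans zero_le_one)
    qed
    show "ereal (log (real m) (real (vs.dim (pow_apply smul C M0 m)))) \<le> ereal (?U m)"
      using log_le_helper[OF m _ le ge1] by simp
  qed
  have lim: "((\<lambda>m. ereal (?U m)) \<longlongrightarrow> ereal (real ?n)) sequentially"
    by (intro tendsto_ereal upper_lim) auto
  have "gk_growth smul C M0 \<le> Limsup sequentially (\<lambda>m. ereal (?U m))"
    unfolding gk_growth_def by (rule Limsup_mono[OF ev])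
  also have "\<dots> = ereal (real ?n)" by (rule lim_imp_Limsup[OF _ lim]) simp
  finally show ?thesis .
qed

lemma growth_lower:
  assumes nz: "(y::'m) \<noteq> 0"
  shows "ereal (real (card (UNIV::'n set))) \<le> gk_growth smul C0 (vs.span G)"
proof -
  let ?n = "card (UNIV::'n set)"
  have "G \<noteq> {}"
  proof
    assume "G = {}"
    then show False using genG[of y] nz by simp
  qed
  then have gpos: "real (card G) > 0" using finG by (simp add: card_gt_0_iff)
  let ?L = "\<lambda>m::nat. log (real m) ((real m + 1) ^ ?n / real (card G))"
  have ev: "eventually (\<lambda>m. ereal (?L m) \<le> ereal (log (real m) (real (vs.dim (pow_apply smul C0 (vs.span G) m))))) sequentially"
    unfolding eventually_sequentially
  proof (intro exI[of _ 2] allI impI)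
    fix m :: nat assume m: "2 \<le> m"
    have d: "(m + 1) ^ ?n \<le> card G * vs.dim (pow_apply smul C0 (vs.span G) m)"
      by (rule dim_pow_lower[OF nz])
    then have "real ((m + 1) ^ ?n) \<le> real (card G) * real (vs.dim (pow_apply smul C0 (vs.span G) m))"
      by (metis of_nat_le_iff of_nat_mult)
    then have le: "(real m + 1) ^ ?n / real (card G) \<le> real (vs.dim (pow_apply smul C0 (vs.span G) m))"
      using gpos by (simp add: divide_le_eq mult.commute add.commute)
    have pos: "0 < (real m + 1) ^ ?n / real (card G)" using gpos by simp
    have "?L m \<le> log (real m) (real (vs.dim (pow_apply smul C0 (vs.span G) m)))"
      by (rule log_mono) (use m pos le in auto)
    then show "ereal (?L m) \<le> ereal (log (real m) (real (vs.dim (pow_apply smul C0 (vs.span G) m))))" by simp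
  qed
  have lim: "((\<lambda>m. ereal (?L m)) \<longlongrightarrow> ereal (real ?n)) sequentially"
    by (intro tendsto_ereal lower_lim gpos)
  have "ereal (real ?n) = Limsup sequentially (\<lambda>m. ereal (?L m))"
    by (rule lim_imp_Limsup[OF _ lim, symmetric]) simp
  also have "\<dots> \<le> gk_growth smul C0 (vs.span G)"
    unfolding gk_growth_def by (rule Limsup_mono[OF ev])
  finally show ?thesis .
qed

lemma GKdim_eq:
  assumes nz: "(y::'m) \<noteq> 0"
  shows "GKdim_AV smul actA actV = ereal (real (card (UNIV::'n set)))"
  unfolding GKdim_AV_def
proof (rule antisym)
  show "(SUP p\<in>gen_pairs smul actA actV. gk_growth smul (fst p) (snd p)) \<le> ereal (real (card (UNIV::'n set)))"
    by (rule SUP_least) (metis growth_upper prod.collapse)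
  show "ereal (real (card (UNIV::'n set))) \<le> (SUP p\<in>gen_pairs smul actA actV. gk_growth smul (fst p) (snd p))"
    by (rule SUP_upper2[OF pair_in]) (simp add: growth_lower[OF nz])
qed

end

theorem proposition3p2:
  fixes smul :: "'k::field_char_0 \<Rightarrow> 'm::ab_group_add \<Rightarrow> 'm"
    and actA :: "('n::finite, 'k) mpoly \<Rightarrow> 'm \<Rightarrow> 'm"
    and actV :: "(('n, 'k) mpoly \<Rightarrow> ('n, 'k) mpoly) \<Rightarrow> 'm \<Rightarrow> 'm"
  assumes "alg_closed_field TYPE('k)"
    and "AV_module smul actA actV"
    and "fg_A_module actA"
  shows "holonomic smul actA actV"
proof -
  obtain G where G: "finite G" "\<forall>m. \<exists>c. m = (\<Sum>g\<in>G. actA (c g) g)"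
    using assms(3) unfolding fg_A_module_def by blast
  interpret avmg smul actA actV G
    by unfold_locales (use assms(2) G in auto)
  show ?thesis
    unfolding holonomic_def
  proof (intro conjI fgAV)
    show "(UNIV :: 'm set) = {0} \<or> GKdim_AV smul actA actV = ereal (real (card (UNIV :: 'n set)))"
    proof (cases "(UNIV :: 'm set) = {0}")
      case False
      then obtain y :: 'm where "y \<noteq> 0" by auto
      then show ?thesis using GKdim_eq by blast
    qed simp
  qed
qed

end
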